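(* Let $\mathcal C$ be a category with a zero object and finite coproducts, $X$ an object of $\mathcal C$, and $r\in End_{\mathcal C}(X)[2]=Hom_{\mathcal C}(X,X\sqcup X)$ a formal difference law in the endomorphism $\Gamma$-ring $End_{\mathcal C}(X)$. Then $w=p^3_2\circ p^4_2(r^2)\in Hom_{\mathcal C}(X,X\sqcup X)$ is the coaddition of an abelian cogroup object structure on $X$ whose co-inverse is $p^2_1(r)\in Hom_{\mathcal C}(X,X)$ (and whose counit is the zero morphism, $s^2_{1,2,1}(r)=0$). Moreover, the multiplicative map $H\mathbb Z\to End_{\mathcal C}(X)$ determined by $r$ (with $\pm1_n\mapsto r^n$) coincides with the map associated to this abelian cogroup structure, namely at $[k]$ the additive extension $\tilde{\mathbb Z}[k]\to Hom_{\mathcal C}(X,X\wedge[k])$ of the map sending $i\in\{1,\dots,k\}$ to the $i$-th coproduct inclusion $X\to X\wedge[k]$ (addition in $Hom_{\mathcal C}(X,X\wedge[k])$ being induced by the cogroup structure).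
   Context: Let $[n]=\{0,1,\dots,n\}$, pointed at $0$. A $\Gamma$-space is a functor $F$ from the finite pointed sets $[n]$ (with pointed maps) to pointed simplicial sets with $F[0]$ a point; for a pointed map $f$ we write $f$ also for $F(f)$; $\Sigma_n$ acts on $F[n]$ via permutations of $\{1,\dots,n\}$. We identify $[n]\wedge[m]$ with $[nm]$ via $i\wedge j\mapsto (j-1)n+i$. A $\Gamma$-ring is a $\Gamma$-space $R$ with unit $1\in R[1]$ and associative unital multiplication given by natural maps $R(K)\wedge R(L)\to R(K\wedge L)$, $p\wedge q\mapsto pq$; $0\in R[1]$ denotes the basepoint. For $x\in R[2]$, $x^k\in R[2^k]$ is the $k$-fold product. For $\mathcal C$ with zero object and finite coproducts, $X\wedge[k]=X\sqcup\dots\sqcup X$ ($k$ copies; indexed by $\{1,\dots,k\}$, $X\wedge[0]=0$), functorial in pointed maps of $[k]$ (index $0$ going to the zero object). The endomorphism $\Gamma$-ring is $End_{\mathcal C}(X)[k]=Hom_{\mathcal C}(X,X\wedge[k])$ (pointed at the zero map), with unit $\mathrm{id}_X\in End_{\mathcal C}(X)[1]$ and multiplication $f\wedge g\mapsto (f\wedge[l])\circ g$ for $f\in End_{\mathcal C}(X)[k]$, $g\in End_{\mathcal C}(X)[l]$. Maps: $p^n_i:[n]\to[n-1]$, $p^n_i(j)=j$ ($j<i$), $p^n_i(i)=0$, $p^n_i(j)=j-1$ ($j>i$); for $1\le i<j\le n$ and $1\le k\le n-1$, $s^n_{i,j,k}:[n]\to[n-1]$ sends $0\mapsto0$, $i,j\mapsto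 k$, and the remaining elements order-preservingly and bijectively onto $\{1,\dots,n-1\}\setminus\{k\}$; $d^n_j:[n-1]\to[n]$ is the order-preserving injection missing $j$. $H\mathbb{Z}$ is the $\Gamma$-ring with $H\mathbb{Z}(K)=\tilde{\mathbb Z}[K]$ the reduced free abelian group on $K$, pointed maps acting by summing coefficients along fibres, unit the inclusion of generators, multiplication $(\sum a_k k)(\sum b_l l)=\sum a_kb_l (k\wedge l)$; $\pm1_n=(1,-1)^n\in H\mathbb{Z}[2^n]$. For $k\ge1$, split $\{1,\dots,2^k\}=A_+\sqcup A_-$ where $i\in A_+$ iff the binary expansion of $i-1$ has an even number of digits $1$. The special action of $\Sigma_{2^{k-1}}\times\Sigma_{2^{k-1}}$ on $F[2^k]$ is the action of the group of permutations of $\{1,\dots,2^k\}$ preserving $A_+$ and $A_-$. Let $\sigma$ be the nontrivial element of $\Sigma_2$. A formal difference law in $R$ is $r\in R[2]$ such that: (1) $p^2_2(r)=1$ and $s^2_{1,2,1}(r)=0$; (2) $p^2_1(r)\,r=r\,p^2_1(r)=\sigma(r)$ in $R[2]$; (3) for every $k\ge1$, $r^k$ is fixed under the special action; (4) for every $k\ge1$, all $1\le i<j\le 2^k$ with one of $i,j$ in $A_+$ and the other in $A_-$, and all $1\le l\le 2^k-1$: $s^{2^k}_{i,j,l}(r^k)=d^{2^k-1}_l\,p^{2^k-1}_i\,p^{2^k}_j(r^k)$. *)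

theory Defs
  imports Main
begin

record ('o,'m) category =
  obj :: "'o set"
  arr :: "'m set"
  cdom :: "'m \<Rightarrow> 'o"
  ccod :: "'m \<Rightarrow> 'o"
  cmp :: "'m \<Rightarrow> 'm \<Rightarrow> 'm"   \<comment> \<open>cmp C g f = g o f\<close>
  idm :: "'o \<Rightarrow> 'm"

definition hom :: "('o,'m) category \<Rightarrow> 'o \<Rightarrow> 'o \<Rightarrow> 'm set" where
  "hom C a b = {f \<in> arr C. cdom C f = a \<and> ccod C f = b}"

definition is_category :: "('o,'m) category \<Rightarrow> bool" where
  "is_category C \<longleftrightarrow>
     (\<forall>f\<in>arr C. cdom C f \<in> obj C \<and> ccod C f \<in> obj C) \<and>
     (\<forall>a\<in>obj C. idm C a \<in> hom C a a) \<and>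
     (\<forall>f\<in>arr C. \<forall>g\<in>arr C. ccod C f = cdom C g \<longrightarrow>
         cmp C g f \<in> hom C (cdom C f) (ccod C g)) \<and>
     (\<forall>f\<in>arr C. cmp C (idm C (ccod C f)) f = f \<and> cmp C f (idm C (cdom C f)) = f) \<and>
     (\<forall>f\<in>arr C. \<forall>g\<in>arr C. \<forall>h\<in>arr C. ccod C f = cdom C g \<and> ccod C g = cdom C h \<longrightarrow>
         cmp C h (cmp C g f) = cmp C (cmp C h g) f)"

definition is_zero_object :: "('o,'m) category \<Rightarrow> 'o \<Rightarrow> bool" where
  "is_zero_object C z \<longleftrightarrow> z \<in> obj C \<and>
     (\<forall>a\<in>obj C. (\<exists>!f. f \<in> hom C a z) \<and> (\<exists>!f. f \<in> hom C z a))"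

definition has_zero_object :: "('o,'m) category \<Rightarrow> bool" where
  "has_zero_object C \<longleftrightarrow> (\<exists>z. is_zero_object C z)"

definition is_coproduct ::
  "('o,'m) category \<Rightarrow> (nat \<Rightarrow> 'o) \<Rightarrow> nat \<Rightarrow> 'o \<Rightarrow> (nat \<Rightarrow> 'm) \<Rightarrow> bool" where
  "is_coproduct C A k P ins \<longleftrightarrow> P \<in> obj C \<and>
     (\<forall>i\<in>{1..k}. ins i \<in> hom C (A i) P) \<and>
     (\<forall>Y\<in>obj C. \<forall>h. (\<forall>i\<in>{1..k}. h i \<in> hom C (A i) Y) \<longrightarrow>
        (\<exists>!u. u \<in> hom C P Y \<and> (\<forall>i\<in>{1..k}. cmp C u (ins i) = h i)))"

definition has_finite_coproducts :: "('o,'m) category \<Rightarrow> bool" where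
  "has_finite_coproducts C \<longleftrightarrow>
     (\<forall>k A. (\<forall>i\<in>{1..k}. A i \<in> obj C) \<longrightarrow> (\<exists>P ins. is_coproduct C A k P ins))"

section \<open>Chosen powers X /\ [k] = Pw k with injections ins k i, and induced maps\<close>

definition copair ::
  "('o,'m) category \<Rightarrow> (nat \<Rightarrow> 'o) \<Rightarrow> (nat \<Rightarrow> nat \<Rightarrow> 'm) \<Rightarrow> nat \<Rightarrow> 'o \<Rightarrow> (nat \<Rightarrow> 'm) \<Rightarrow> 'm" where
  "copair C Pw ins k Y h =
     (THE u. u \<in> hom C (Pw k) Y \<and> (\<forall>i\<in>{1..k}. cmp C u (ins k i) = h i))"

definition zmor :: "('o,'m) category \<Rightarrow> 'o \<Rightarrow> 'o \<Rightarrow> 'm" where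
  "zmor C a b = (THE f. f \<in> hom C a b \<and>
     (\<exists>z g h. is_zero_object C z \<and> g \<in> hom C a z \<and> h \<in> hom C z b \<and> f = cmp C h g))"

text \<open>The map X /\ [k] -> X /\ [l] induced by a pointed map f : [k] -> [l].\<close>
definition indmap ::
  "('o,'m) category \<Rightarrow> 'o \<Rightarrow> (nat \<Rightarrow> 'o) \<Rightarrow> (nat \<Rightarrow> nat \<Rightarrow> 'm) \<Rightarrow> nat \<Rightarrow> nat \<Rightarrow> (nat \<Rightarrow> nat) \<Rightarrow> 'm" where
  "indmap C X Pw ins k l f =
     copair C Pw ins k (Pw l) (\<lambda>i. if f i = 0 then zmor C X (Pw l) else ins l (f i))"

text \<open>Gamma-space structure of End(X): f acting on x in End(X)[k] = Hom(X, X /\ [k]).\<close>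
definition gact ::
  "('o,'m) category \<Rightarrow> 'o \<Rightarrow> (nat \<Rightarrow> 'o) \<Rightarrow> (nat \<Rightarrow> nat \<Rightarrow> 'm) \<Rightarrow> nat \<Rightarrow> nat \<Rightarrow> (nat \<Rightarrow> nat) \<Rightarrow> 'm \<Rightarrow> 'm" where
  "gact C X Pw ins k l f x = cmp C (indmap C X Pw ins k l f) x"

text \<open>Multiplication End[k] /\ End[l] -> End[kl], f /\ g |-> (f /\ [l]) o g, using the
  identification i /\ j |-> (j-1)k + i.\<close>
definition emul ::
  "('o,'m) category \<Rightarrow> 'o \<Rightarrow> (nat \<Rightarrow> 'o) \<Rightarrow> (nat \<Rightarrow> nat \<Rightarrow> 'm) \<Rightarrow> nat \<Rightarrow> nat \<Rightarrow> 'm \<Rightarrow> 'm \<Rightarrow> 'm" where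
  "emul C X Pw ins k l f g =
     cmp C (copair C Pw ins l (Pw (k * l))
              (\<lambda>j. gact C X Pw ins k (k * l) (\<lambda>i. if i = 0 then 0 else (j - 1) * k + i) f)) g"

text \<open>rpow n = r^n in End[2^n] (rpow 0 is the unit id_X in End[1]).\<close>
primrec rpow ::
  "('o,'m) category \<Rightarrow> 'o \<Rightarrow> (nat \<Rightarrow> 'o) \<Rightarrow> (nat \<Rightarrow> nat \<Rightarrow> 'm) \<Rightarrow> 'm \<Rightarrow> nat \<Rightarrow> 'm" where
  "rpow C X Pw ins r 0 = idm C X"
| "rpow C X Pw ins r (Suc n) = emul C X Pw ins (2 ^ n) 2 (rpow C X Pw ins r n) r"

definition pmap :: "nat \<Rightarrow> nat \<Rightarrow> nat \<Rightarrow> nat" where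
  "pmap n i x = (if x < i then x else if x = i then 0 else x - 1)"

definition smap :: "nat \<Rightarrow> nat \<Rightarrow> nat \<Rightarrow> nat \<Rightarrow> nat \<Rightarrow> nat" where
  "smap n i j k x =
     (if x = 0 then 0 else if x = i \<or> x = j then k
      else (let q = x - card {y \<in> {i, j}. y < x} in if q < k then q else q + 1))"

definition dmap :: "nat \<Rightarrow> nat \<Rightarrow> nat \<Rightarrow> nat" where
  "dmap n j x = (if x < j then x else x + 1)"

definition swap2 :: "nat \<Rightarrow> nat" where
  "swap2 x = (if x = 1 then 2 else if x = 2 then 1 else x)"

fun bitcount :: "nat \<Rightarrow> nat" where
  "bitcount n = (if n = 0 then 0 else n mod 2 + bitcount (n div 2))"

definition in_Aplus :: "nat \<Rightarrow> nat \<Rightarrow> bool" where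
  "in_Aplus k i \<longleftrightarrow> i \<in> {1..2 ^ k} \<and> even (bitcount (i - 1))"

definition in_Aminus :: "nat \<Rightarrow> nat \<Rightarrow> bool" where
  "in_Aminus k i \<longleftrightarrow> i \<in> {1..2 ^ k} \<and> odd (bitcount (i - 1))"

definition special_perm :: "nat \<Rightarrow> (nat \<Rightarrow> nat) \<Rightarrow> bool" where
  "special_perm k \<pi> \<longleftrightarrow> \<pi> 0 = 0 \<and> bij_betw \<pi> {1..2 ^ k} {1..2 ^ k} \<and>
     \<pi> ` {i. in_Aplus k i} = {i. in_Aplus k i} \<and> \<pi> ` {i. in_Aminus k i} = {i. in_Aminus k i}"

definition formal_difference_law ::
  "('o,'m) category \<Rightarrow> 'o \<Rightarrow> (nat \<Rightarrow> 'o) \<Rightarrow> (nat \<Rightarrow> nat \<Rightarrow> 'm) \<Rightarrow> 'm \<Rightarrow> bool" where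
  "formal_difference_law C X Pw ins r \<longleftrightarrow>
     \<comment> \<open>(1)\<close>
     gact C X Pw ins 2 1 (pmap 2 2) r = idm C X \<and>
     gact C X Pw ins 2 1 (smap 2 1 2 1) r = zmor C X (Pw 1) \<and>
     \<comment> \<open>(2)\<close>
     emul C X Pw ins 1 2 (gact C X Pw ins 2 1 (pmap 2 1) r) r = gact C X Pw ins 2 2 swap2 r \<and>
     emul C X Pw ins 2 1 r (gact C X Pw ins 2 1 (pmap 2 1) r) = gact C X Pw ins 2 2 swap2 r \<and>
     \<comment> \<open>(3)\<close>
     (\<forall>k \<ge> 1. \<forall>\<pi>. special_perm k \<pi> \<longrightarrow>
        gact C X Pw ins (2 ^ k) (2 ^ k) \<pi> (rpow C X Pw ins r k) = rpow C X Pw ins r k) \<and>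
     \<comment> \<open>(4)\<close>
     (\<forall>k \<ge> 1. \<forall>i j l. 1 \<le> i \<and> i < j \<and> j \<le> 2 ^ k \<and>
        ((in_Aplus k i \<and> in_Aminus k j) \<or> (in_Aminus k i \<and> in_Aplus k j)) \<and>
        1 \<le> l \<and> l \<le> 2 ^ k - 1 \<longrightarrow>
        gact C X Pw ins (2 ^ k) (2 ^ k - 1) (smap (2 ^ k) i j l) (rpow C X Pw ins r k) =
        gact C X Pw ins (2 ^ k - 2) (2 ^ k - 1) (dmap (2 ^ k - 1) l)
          (gact C X Pw ins (2 ^ k - 1) (2 ^ k - 2) (pmap (2 ^ k - 1) i)
            (gact C X Pw ins (2 ^ k) (2 ^ k - 1) (pmap (2 ^ k) j) (rpow C X Pw ins r k))))"

definition copair2 ::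
  "('o,'m) category \<Rightarrow> (nat \<Rightarrow> 'o) \<Rightarrow> (nat \<Rightarrow> nat \<Rightarrow> 'm) \<Rightarrow> 'o \<Rightarrow> 'm \<Rightarrow> 'm \<Rightarrow> 'm" where
  "copair2 C Pw ins Y f g = copair C Pw ins 2 Y (\<lambda>i. if i = 1 then f else g)"

text \<open>w : X -> X |_| X is the coaddition, \<nu> : X -> X the co-inverse, and the counit is the
  (unique) map X -> 0, so that (counit |_| id) o w = id reads [0, id] o w = id, etc.\<close>
definition abelian_cogroup ::
  "('o,'m) category \<Rightarrow> 'o \<Rightarrow> (nat \<Rightarrow> 'o) \<Rightarrow> (nat \<Rightarrow> nat \<Rightarrow> 'm) \<Rightarrow> 'm \<Rightarrow> 'm \<Rightarrow> bool" where
  "abelian_cogroup C X Pw ins w \<nu> \<longleftrightarrow>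
     w \<in> hom C X (Pw 2) \<and> \<nu> \<in> hom C X X \<and>
     \<comment> \<open>coassociativity\<close>
     cmp C (copair2 C Pw ins (Pw 3)
              (cmp C (copair2 C Pw ins (Pw 3) (ins 3 1) (ins 3 2)) w) (ins 3 3)) w =
     cmp C (copair2 C Pw ins (Pw 3)
              (ins 3 1) (cmp C (copair2 C Pw ins (Pw 3) (ins 3 2) (ins 3 3)) w)) w \<and>
     \<comment> \<open>counit (the zero morphism)\<close>
     cmp C (copair2 C Pw ins X (zmor C X X) (idm C X)) w = idm C X \<and>
     cmp C (copair2 C Pw ins X (idm C X) (zmor C X X)) w = idm C X \<and>
     \<comment> \<open>co-inverse\<close>
     cmp C (copair2 C Pw ins X \<nu> (idm C X)) w = zmor C X X \<and>
     cmp C (copair2 C Pw ins X (idm C X) \<nu>) w = zmor C X X \<and>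
     \<comment> \<open>cocommutativity\<close>
     cmp C (copair2 C Pw ins (Pw 2) (ins 2 2) (ins 2 1)) w = w"

definition cg_add ::
  "('o,'m) category \<Rightarrow> (nat \<Rightarrow> 'o) \<Rightarrow> (nat \<Rightarrow> nat \<Rightarrow> 'm) \<Rightarrow> 'm \<Rightarrow> 'o \<Rightarrow> 'm \<Rightarrow> 'm \<Rightarrow> 'm" where
  "cg_add C Pw ins w Y f g = cmp C (copair2 C Pw ins Y f g) w"

primrec cg_nmul ::
  "('o,'m) category \<Rightarrow> 'o \<Rightarrow> (nat \<Rightarrow> 'o) \<Rightarrow> (nat \<Rightarrow> nat \<Rightarrow> 'm) \<Rightarrow> 'm \<Rightarrow> 'o \<Rightarrow> nat \<Rightarrow> 'm \<Rightarrow> 'm" where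
  "cg_nmul C X Pw ins w Y 0 g = zmor C X Y"
| "cg_nmul C X Pw ins w Y (Suc n) g = cg_add C Pw ins w Y (cg_nmul C X Pw ins w Y n g) g"

definition cg_zmul ::
  "('o,'m) category \<Rightarrow> 'o \<Rightarrow> (nat \<Rightarrow> 'o) \<Rightarrow> (nat \<Rightarrow> nat \<Rightarrow> 'm) \<Rightarrow> 'm \<Rightarrow> 'm \<Rightarrow> 'o \<Rightarrow> int \<Rightarrow> 'm \<Rightarrow> 'm" where
  "cg_zmul C X Pw ins w \<nu> Y a g =
     (if 0 \<le> a then cg_nmul C X Pw ins w Y (nat a) g
      else cg_nmul C X Pw ins w Y (nat (- a)) (cmp C g \<nu>))"

definition cg_map ::
  "('o,'m) category \<Rightarrow> 'o \<Rightarrow> (nat \<Rightarrow> 'o) \<Rightarrow> (nat \<Rightarrow> nat \<Rightarrow> 'm) \<Rightarrow> 'm \<Rightarrow> 'm \<Rightarrow> nat \<Rightarrow> (nat \<Rightarrow> int) \<Rightarrow> 'm" where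
  "cg_map C X Pw ins w \<nu> k a =
     foldr (\<lambda>i acc. cg_add C Pw ins w (Pw k) acc (cg_zmul C X Pw ins w \<nu> (Pw k) (a i) (ins k i)))
       [1..<k+1] (zmor C X (Pw k))"

text \<open>Elements of HZ[n] = reduced free abelian group on [n] are coefficient functions
  a : nat => int (only the values on {1..n} matter).\<close>
definition hz_act :: "nat \<Rightarrow> (nat \<Rightarrow> nat) \<Rightarrow> (nat \<Rightarrow> int) \<Rightarrow> nat \<Rightarrow> int" where
  "hz_act n f a = (\<lambda>y. if y = 0 then 0 else (\<Sum>x\<in>{1..n}. if f x = y then a x else 0))"

definition hz_mul :: "nat \<Rightarrow> nat \<Rightarrow> (nat \<Rightarrow> int) \<Rightarrow> (nat \<Rightarrow> int) \<Rightarrow> nat \<Rightarrow> int" where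
  "hz_mul k l a b = (\<lambda>x. \<Sum>i\<in>{1..k}. \<Sum>j\<in>{1..l}. if (j - 1) * k + i = x then a i * b j else 0)"

primrec pm1 :: "nat \<Rightarrow> nat \<Rightarrow> int" where
  "pm1 0 = (\<lambda>x. if x = 1 then 1 else 0)"
| "pm1 (Suc n) = hz_mul (2 ^ n) 2 (pm1 n) (\<lambda>x. if x = 1 then 1 else if x = 2 then -1 else 0)"

end

theory Submission
  imports Defs
begin

declare bitcount.simps[simp del]

definition pmp :: "nat \<Rightarrow> nat \<Rightarrow> (nat \<Rightarrow> nat) \<Rightarrow> bool" where
  "pmp k l f \<longleftrightarrow> (\<forall>x\<in>{1..k}. f x \<le> l)"

definition cmpf :: "(nat \<Rightarrow> nat) \<Rightarrow> (nat \<Rightarrow> nat) \<Rightarrow> nat \<Rightarrow> nat" where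
  "cmpf f g = (\<lambda>x. if f x = 0 then 0 else g (f x))"

definition cat2 :: "nat \<Rightarrow> (nat \<Rightarrow> nat) \<Rightarrow> (nat \<Rightarrow> nat) \<Rightarrow> nat \<Rightarrow> nat" where
  "cat2 n a b x = (if x \<le> 2 ^ n then a x else b (x - 2 ^ n))"

declare pm1.simps(2)[simp del]

lemma two_sum: "(\<Sum>j\<in>{1..2::nat}. g j) = g 1 + g 2"
  by (simp add: numeral_2_eq_2)


definition sig :: "nat \<Rightarrow> (nat \<Rightarrow> nat) \<Rightarrow> nat \<Rightarrow> int" where
  "sig n a = hz_act (2 ^ n) a (pm1 n)"

lemma pm1_Suc: "pm1 (Suc n) x = (if x \<in> {1..2 ^ n} then pm1 n x else 0) +
   (if 2 ^ n < x \<and> x - 2 ^ n \<in> {1..2 ^ n} then - pm1 n (x - 2 ^ n) else 0)"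
proof -
  have "pm1 (Suc n) x = (\<Sum>i\<in>{1..2 ^ n}. (if i = x then pm1 n i else 0) + (if 2 ^ n + i = x then - pm1 n i else 0))"
    unfolding pm1.simps(2) hz_mul_def two_sum by (rule sum.cong) simp_all
  also have "\<dots> = (\<Sum>i\<in>{1..2 ^ n}. if i = x then pm1 n i else 0) + (\<Sum>i\<in>{1..2 ^ n}. if 2 ^ n + i = x then - pm1 n i else 0)"
    by (rule sum.distrib)
  also have "(\<Sum>i\<in>{1..2 ^ n}. if i = x then pm1 n i else 0) = (if x \<in> {1..2 ^ n} then pm1 n x else 0)"
    by (simp add: sum.delta')
  also have "(\<Sum>i\<in>{1..2 ^ n}. if 2 ^ n + i = x then - pm1 n i else 0) =
       (if 2 ^ n < x \<and> x - 2 ^ n \<in> {1..2 ^ n} then - pm1 n (x - 2 ^ n) else 0)"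
  proof (cases "2 ^ n < x")
    case True
    then have "\<And>i. (2 ^ n + i = x) = (i = x - 2 ^ n)" by auto
    then show ?thesis using True by (simp add: sum.delta')
  next
    case False
    then have "\<And>i. i \<in> {1..2 ^ n} \<Longrightarrow> 2 ^ n + i \<noteq> x" by auto
    then show ?thesis using False by simp
  qed
  finally show ?thesis .
qed

lemma pm1_low: "x \<in> {1..2 ^ n} \<Longrightarrow> pm1 (Suc n) x = pm1 n x"
  by (simp add: pm1_Suc)

lemma pm1_high: "x \<in> {1..2 ^ n} \<Longrightarrow> pm1 (Suc n) (x + 2 ^ n) = - pm1 n x"
  by (simp add: pm1_Suc)

lemma bitcount_0: "bitcount 0 = 0"
  by (subst bitcount.simps) simp

lemma bitcount_eq: "bitcount m = m mod 2 + bitcount (m div 2)"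
proof (cases "m = 0")
  case True then show ?thesis by (simp add: bitcount_0)
next
  case False then show ?thesis by (subst bitcount.simps) simp
qed

lemma bitcount_pow: "m < 2 ^ n \<Longrightarrow> bitcount (2 ^ n + m) = Suc (bitcount m)"
proof (induction n arbitrary: m)
  case 0
  then have "m = 0" by simp
  then show ?case using bitcount_eq[of 1] bitcount_0 by simp
next
  case (Suc n)
  have "m div 2 < 2 ^ n" using Suc.prems by auto
  then have "bitcount (2 ^ n + m div 2) = Suc (bitcount (m div 2))" by (rule Suc.IH)
  moreover have "(2 ^ Suc n + m) mod 2 = m mod 2" by simp
  moreover have "(2 ^ Suc n + m) div 2 = 2 ^ n + m div 2" by simp
  ultimately show ?case using bitcount_eq[of "2 ^ Suc n + m"] bitcount_eq[of m] by simp
qed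

lemma pm1_sign: "x \<in> {1..2 ^ n} \<Longrightarrow> pm1 n x = (if in_Aplus n x then 1 else -1)"
proof (induction n arbitrary: x)
  case 0
  then have "x = 1" by simp
  then show ?case by (simp add: in_Aplus_def bitcount_0)
next
  case (Suc n)
  show ?case
  proof (cases "x \<le> 2 ^ n")
    case True
    then have x: "x \<in> {1..2 ^ n}" using Suc.prems by auto
    then show ?thesis using pm1_low[OF x] Suc.IH[OF x] by (auto simp: in_Aplus_def)
  next
    case False
    define x0 where "x0 = x - 2 ^ n"
    have x0: "x0 \<in> {1..2 ^ n}" and xe: "x = x0 + 2 ^ n" using Suc.prems False unfolding x0_def by auto
    have "x - 1 = 2 ^ n + (x0 - 1)" using xe x0 by auto
    then have "bitcount (x - 1) = Suc (bitcount (x0 - 1))" using bitcount_pow[of "x0 - 1" n] x0 by auto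
    then show ?thesis using pm1_high[OF x0] Suc.IH[OF x0] xe x0 Suc.prems by (auto simp: in_Aplus_def)
  qed
qed

lemma sig_step: "sig (Suc n) (cat2 n a b) y = sig n a y - sig n b y"
proof (cases "y = 0")
  case True then show ?thesis by (simp add: sig_def hz_act_def)
next
  case False
  let ?f = "\<lambda>x. if cat2 n a b x = y then pm1 (Suc n) x else 0"
  have sp: "{1..2 ^ Suc n} = {1..2 ^ n} \<union> {1 + 2 ^ n..2 ^ n + (2::nat) ^ n}" by auto
  have "sum ?f {1..2 ^ Suc n} = sum ?f {1..2 ^ n} + sum ?f {1 + 2 ^ n..2 ^ n + 2 ^ n}"
    unfolding sp by (rule sum.union_disjoint) auto
  also have "sum ?f {1 + 2 ^ n..2 ^ n + 2 ^ n} = (\<Sum>x\<in>{1..2 ^ n}. ?f (x + 2 ^ n))"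
    by (rule sum.shift_bounds_cl_nat_ivl)
  also have "\<dots> = (\<Sum>x\<in>{1..2 ^ n}. - (if b x = y then pm1 n x else 0))"
    by (rule sum.cong) (auto simp: cat2_def pm1_high)
  also have "sum ?f {1..2 ^ n} = (\<Sum>x\<in>{1..2 ^ n}. if a x = y then pm1 n x else 0)"
    by (rule sum.cong) (auto simp: cat2_def pm1_low)
  finally show ?thesis using False by (simp add: sig_def hz_act_def sum_negf)
qed

lemma sig_zero: "sig n (\<lambda>_. 0) = (\<lambda>_. 0)"
  by (auto simp: sig_def hz_act_def)

lemma sig_const: "i \<noteq> 0 \<Longrightarrow> sig 0 (\<lambda>_. i) = (\<lambda>y. if y = i then 1 else 0)"
  by (auto simp: sig_def hz_act_def)

lemma sum_ind_card: "finite S \<Longrightarrow> (\<Sum>x\<in>S. if P x then (1::int) else 0) = int (card {x\<in>S. P x})"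
  by (simp add: sum.inter_filter[symmetric])

lemma sig_card:
  assumes "y \<noteq> 0"
  shows "sig n a y = int (card {x. in_Aplus n x \<and> a x = y}) - int (card {x. in_Aminus n x \<and> a x = y})"
proof -
  have "sig n a y = (\<Sum>x\<in>{1..2 ^ n}. (if in_Aplus n x \<and> a x = y then 1 else 0) - (if in_Aminus n x \<and> a x = y then 1 else 0))"
    unfolding sig_def hz_act_def using assms
    by (auto intro!: sum.cong simp: pm1_sign in_Aminus_def in_Aplus_def)
  also have "\<dots> = int (card {x\<in>{1..2 ^ n}. in_Aplus n x \<and> a x = y}) - int (card {x\<in>{1..2 ^ n}. in_Aminus n x \<and> a x = y})"
    by (simp add: sum_subtractf sum_ind_card)
  also have "{x\<in>{1..2 ^ n}. in_Aplus n x \<and> a x = y} = {x. in_Aplus n x \<and> a x = y}"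
    by (auto simp: in_Aplus_def)
  also have "{x\<in>{1..2 ^ n}. in_Aminus n x \<and> a x = y} = {x. in_Aminus n x \<and> a x = y}"
    by (auto simp: in_Aminus_def)
  finally show ?thesis .
qed


definition red :: "nat \<Rightarrow> (nat \<Rightarrow> nat) \<Rightarrow> bool" where
  "red n b \<longleftrightarrow> (\<forall>i j. in_Aplus n i \<longrightarrow> in_Aminus n j \<longrightarrow> b i = b j \<longrightarrow> b i = 0)"

lemma PM_sub: "{x. in_Aplus n x \<and> Q x} \<subseteq> {1..2 ^ n}" "{x. in_Aminus n x \<and> Q x} \<subseteq> {1..2 ^ n}"
  by (auto simp: in_Aplus_def in_Aminus_def)

lemma PM_fin: "finite {x. in_Aplus n x \<and> Q x}" "finite {x. in_Aminus n x \<and> Q x}"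
  by (rule finite_subset[OF PM_sub(1)], simp) (rule finite_subset[OF PM_sub(2)], simp)

lemma sig_cancel:
  assumes i: "in_Aplus n i" and j: "in_Aminus n j" and aij: "a i = a j"
  shows "sig n (\<lambda>x. if x = i \<or> x = j then 0 else a x) = sig n a"
proof
  fix y
  show "sig n (\<lambda>x. if x = i \<or> x = j then 0 else a x) y = sig n a y"
  proof (cases "y = 0")
    case True then show ?thesis by (simp add: sig_def hz_act_def)
  next
    case False
    let ?S = "{1..(2::nat) ^ n}"
    have iS: "i \<in> ?S" and jS: "j \<in> ?S" using i j by (auto simp: in_Aplus_def in_Aminus_def)
    have ij: "i \<noteq> j" using i j by (auto simp: in_Aplus_def in_Aminus_def)
    have jS': "j \<in> ?S - {i}" using jS ij by auto
    have pi: "pm1 n i = 1" using pm1_sign[OF iS] i by simp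
    have pj: "pm1 n j = -1" using pm1_sign[OF jS] j by (auto simp: in_Aplus_def in_Aminus_def)
    have split: "sum f ?S = f i + (f j + sum f (?S - {i} - {j}))" for f :: "nat \<Rightarrow> int"
    proof -
      have "sum f ?S = f i + sum f (?S - {i})" by (rule sum.remove[OF _ iS]) simp
      moreover have "sum f (?S - {i}) = f j + sum f (?S - {i} - {j})" by (rule sum.remove[OF _ jS']) simp
      ultimately show ?thesis by simp
    qed
    let ?f2 = "\<lambda>x. if (if x = i \<or> x = j then 0 else a x) = y then pm1 n x else 0"
    let ?f = "\<lambda>x. if a x = y then pm1 n x else 0"
    have "sum ?f2 (?S - {i} - {j}) = sum ?f (?S - {i} - {j})" by (rule sum.cong) auto
    moreover have "?f2 i = 0" "?f2 j = 0" using False by auto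
    moreover have "?f i + ?f j = 0" using aij pi pj by auto
    ultimately have "sum ?f2 ?S = sum ?f ?S" using split[of ?f2] split[of ?f] by simp
    then show ?thesis using False by (simp add: sig_def hz_act_def)
  qed
qed

lemma red_fib:
  assumes r: "red n b" and y: "y \<noteq> 0"
  shows "card {x. in_Aplus n x \<and> b x = y} = nat (sig n b y) \<and> card {x. in_Aminus n x \<and> b x = y} = nat (- sig n b y)"
proof -
  have "{x. in_Aplus n x \<and> b x = y} = {} \<or> {x. in_Aminus n x \<and> b x = y} = {}"
  proof (rule ccontr)
    assume "\<not> ?thesis"
    then obtain i j where "in_Aplus n i" "b i = y" "in_Aminus n j" "b j = y" by blast
    then show False using r y unfolding red_def by metis
  qed
  then show ?thesis
  proof
    assume e: "{x. in_Aplus n x \<and> b x = y} = {}"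
    have "card {x. in_Aplus n x \<and> b x = y} = 0" unfolding e by simp
    then show ?thesis using sig_card[OF y, of n b] by simp
  next
    assume e: "{x. in_Aminus n x \<and> b x = y} = {}"
    have "card {x. in_Aminus n x \<and> b x = y} = 0" unfolding e by simp
    then show ?thesis using sig_card[OF y, of n b] by simp
  qed
qed

lemma card_fibs:
  fixes f :: "'a \<Rightarrow> nat"
  assumes fin: "finite S" and bd: "\<forall>x\<in>S. f x \<le> k"
  shows "card S = card {x\<in>S. f x = 0} + (\<Sum>y\<in>{1..k}. card {x\<in>S. f x = y})"
proof -
  have "S = (\<Union>y\<in>{0..k}. {x\<in>S. f x = y})" using bd by auto
  then have "card S = (\<Sum>y\<in>{0..k}. card {x\<in>S. f x = y})"
    using card_UN_disjoint[of "{0..k}" "\<lambda>y. {x\<in>S. f x = y}"] fin by auto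
  also have "\<dots> = card {x\<in>S. f x = 0} + (\<Sum>y\<in>{Suc 0..k}. card {x\<in>S. f x = y})"
    by (simp add: sum.atLeast_Suc_atMost)
  finally show ?thesis by simp
qed

lemma zero_fib:
  fixes f g :: "'a \<Rightarrow> nat"
  assumes fin: "finite S" and bf: "\<forall>x\<in>S. f x \<le> k" and bg: "\<forall>x\<in>S. g x \<le> k"
    and eq: "\<forall>y. y \<noteq> 0 \<longrightarrow> card {x\<in>S. f x = y} = card {x\<in>S. g x = y}"
  shows "card {x\<in>S. f x = 0} = card {x\<in>S. g x = 0}"
proof -
  have "(\<Sum>y\<in>{1..k}. card {x\<in>S. f x = y}) = (\<Sum>y\<in>{1..k}. card {x\<in>S. g x = y})"
    by (rule sum.cong) (use eq in auto)
  then show ?thesis using card_fibs[OF fin bf] card_fibs[OF fin bg] by simp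
qed

lemma fiber_perm:
  assumes fin: "finite S" and eq: "\<forall>y. card {x\<in>S. f x = y} = card {x\<in>S. g x = y}"
  shows "\<exists>\<pi>. bij_betw \<pi> S S \<and> (\<forall>x\<in>S. f (\<pi> x) = g x)"
proof -
  have "\<forall>y. \<exists>h. bij_betw h {x\<in>S. g x = y} {x\<in>S. f x = y}"
  proof
    fix y
    show "\<exists>h. bij_betw h {x\<in>S. g x = y} {x\<in>S. f x = y}"
      by (rule finite_same_card_bij) (use fin eq in simp_all)
  qed
  from choice[OF this] obtain H where H0: "\<forall>y. bij_betw (H y) {x\<in>S. g x = y} {x\<in>S. f x = y}" ..
  have H: "\<And>y. bij_betw (H y) {x\<in>S. g x = y} {x\<in>S. f x = y}" using H0 by blast
  define \<pi> where "\<pi> x = H (g x) x" for x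
  have img: "\<And>x. x \<in> S \<Longrightarrow> \<pi> x \<in> S \<and> f (\<pi> x) = g x"
  proof -
    fix x assume x: "x \<in> S"
    then have "x \<in> {z\<in>S. g z = g x}" by simp
    then have "H (g x) x \<in> {z\<in>S. f z = g x}" using bij_betw_apply[OF H] by blast
    then show "\<pi> x \<in> S \<and> f (\<pi> x) = g x" unfolding \<pi>_def by simp
  qed
  have inj: "inj_on \<pi> S"
  proof (rule inj_onI)
    fix x x' assume x: "x \<in> S" and x': "x' \<in> S" and e: "\<pi> x = \<pi> x'"
    have gg: "g x = g x'" using img[OF x] img[OF x'] e by metis
    have "inj_on (H (g x)) {z\<in>S. g z = g x}" using H bij_betw_imp_inj_on by blast
    moreover have "x \<in> {z\<in>S. g z = g x}" "x' \<in> {z\<in>S. g z = g x}" using x x' gg by auto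
    moreover have "H (g x) x = H (g x) x'" using e gg unfolding \<pi>_def by simp
    ultimately show "x = x'" by (meson inj_onD)
  qed
  have sub: "\<pi> ` S \<subseteq> S" using img by auto
  have "card (\<pi> ` S) = card S" by (rule card_image[OF inj])
  then have "\<pi> ` S = S" using card_subset_eq[OF fin sub] by simp
  then have "bij_betw \<pi> S S" using inj unfolding bij_betw_def by simp
  then show ?thesis using img by blast
qed

locale fdl_ctx =
  fixes C :: "('o,'m) category" and X :: 'o and Pw :: "nat \<Rightarrow> 'o"
    and ins :: "nat \<Rightarrow> nat \<Rightarrow> 'm" and r :: 'm
  assumes cat: "is_category C" and zo: "has_zero_object C" and Xobj: "X \<in> obj C"
    and cop: "\<forall>k. is_coproduct C (\<lambda>_. X) k (Pw k) (ins k)"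
    and Pw1: "Pw 1 = X" and ins11: "ins 1 1 = idm C X"
    and rhom: "r \<in> hom C X (Pw 2)"
    and fdl: "formal_difference_law C X Pw ins r"
begin

lemma comp_hom: "f \<in> hom C a b \<Longrightarrow> g \<in> hom C b c \<Longrightarrow> cmp C g f \<in> hom C a c"
  using cat unfolding is_category_def hom_def by auto

lemma assoc: "f \<in> hom C a b \<Longrightarrow> g \<in> hom C b c \<Longrightarrow> h \<in> hom C c d \<Longrightarrow>
   cmp C h (cmp C g f) = cmp C (cmp C h g) f"
  using cat unfolding is_category_def hom_def by auto

lemma id_hom: "a \<in> obj C \<Longrightarrow> idm C a \<in> hom C a a"
  using cat unfolding is_category_def by auto

lemma id_left: "f \<in> hom C a b \<Longrightarrow> cmp C (idm C b) f = f"
  using cat unfolding is_category_def hom_def by auto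

lemma id_right: "f \<in> hom C a b \<Longrightarrow> cmp C f (idm C a) = f"
  using cat unfolding is_category_def hom_def by auto

lemma hom_obj: "f \<in> hom C a b \<Longrightarrow> a \<in> obj C \<and> b \<in> obj C"
  using cat unfolding is_category_def hom_def by auto

lemma copk: "is_coproduct C (\<lambda>_. X) k (Pw k) (ins k)"
  using cop by blast

lemma Pw_obj: "Pw k \<in> obj C"
  using copk[of k] unfolding is_coproduct_def by (elim conjE)

lemma ins_hom: "i \<in> {1..k} \<Longrightarrow> ins k i \<in> hom C X (Pw k)"
  using copk[of k] unfolding is_coproduct_def by (elim conjE) blast

lemma cop_univ: "Y \<in> obj C \<Longrightarrow> \<forall>i\<in>{1..k}. h i \<in> hom C X Y \<Longrightarrow>
   \<exists>!u. u \<in> hom C (Pw k) Y \<and> (\<forall>i\<in>{1..k}. cmp C u (ins k i) = h i)"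
  using copk[of k] unfolding is_coproduct_def by (elim conjE) blast

lemma copair:
  assumes "Y \<in> obj C" "\<forall>i\<in>{1..k}. h i \<in> hom C X Y"
  shows "copair C Pw ins k Y h \<in> hom C (Pw k) Y \<and>
         (\<forall>i\<in>{1..k}. cmp C (copair C Pw ins k Y h) (ins k i) = h i)"
proof -
  have "\<exists>!u. u \<in> hom C (Pw k) Y \<and> (\<forall>i\<in>{1..k}. cmp C u (ins k i) = h i)"
    by (rule cop_univ[OF assms])
  then show ?thesis unfolding copair_def by (rule theI')
qed

lemma copair_hom: "Y \<in> obj C \<Longrightarrow> \<forall>i\<in>{1..k}. h i \<in> hom C X Y \<Longrightarrow> copair C Pw ins k Y h \<in> hom C (Pw k) Y"
  using copair by (rule conjunct1)

lemma copair_ins: "Y \<in> obj C \<Longrightarrow> \<forall>i\<in>{1..k}. h i \<in> hom C X Y \<Longrightarrow> i \<in> {1..k} \<Longrightarrow>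
   cmp C (copair C Pw ins k Y h) (ins k i) = h i"
  using copair by simp

lemma copair_unique:
  assumes "u \<in> hom C (Pw k) Y" "\<forall>i\<in>{1..k}. cmp C u (ins k i) = h i"
  shows "copair C Pw ins k Y h = u"
proof -
  have Y: "Y \<in> obj C" using hom_obj[OF assms(1)] by auto
  have "\<forall>i\<in>{1..k}. h i \<in> hom C X Y"
  proof
    fix i assume i: "i \<in> {1..k}"
    then have "h i = cmp C u (ins k i)" using assms(2) by simp
    then show "h i \<in> hom C X Y" using comp_hom[OF ins_hom[OF i] assms(1)] by simp
  qed
  then have "\<exists>!u. u \<in> hom C (Pw k) Y \<and> (\<forall>i\<in>{1..k}. cmp C u (ins k i) = h i)"
    by (rule cop_univ[OF Y])
  then show ?thesis unfolding copair_def by (rule the1_equality) (use assms in auto)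
qed

lemma hom_ext:
  assumes "u \<in> hom C (Pw k) Y" "v \<in> hom C (Pw k) Y"
    "\<forall>i\<in>{1..k}. cmp C u (ins k i) = cmp C v (ins k i)"
  shows "u = v"
proof -
  have 1: "copair C Pw ins k Y (\<lambda>i. cmp C u (ins k i)) = u"
    by (rule copair_unique[OF assms(1)]) simp
  have 2: "copair C Pw ins k Y (\<lambda>i. cmp C u (ins k i)) = v"
    by (rule copair_unique[OF assms(2)]) (use assms(3) in simp)
  show ?thesis using 1 2 by simp
qed

lemma copair_cong:
  assumes "\<forall>i\<in>{1..k}. h i = h' i"
  shows "copair C Pw ins k Y h = copair C Pw ins k Y h'"
proof -
  have "\<And>u. (\<forall>i\<in>{1..k}. cmp C u (ins k i) = h i) = (\<forall>i\<in>{1..k}. cmp C u (ins k i) = h' i)"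
    using assms by auto
  then show ?thesis unfolding copair_def by simp
qed

lemma copair_nat:
  assumes "g \<in> hom C Y Z" "\<forall>i\<in>{1..k}. h i \<in> hom C X Y"
  shows "cmp C g (copair C Pw ins k Y h) = copair C Pw ins k Z (\<lambda>i. cmp C g (h i))"
proof -
  have Y: "Y \<in> obj C" using hom_obj[OF assms(1)] by auto
  show ?thesis
    apply (rule sym, rule copair_unique)
    apply (rule comp_hom[OF copair_hom[OF Y assms(2)] assms(1)])
    using assoc[OF ins_hom copair_hom[OF Y assms(2)] assms(1)] copair_ins[OF Y assms(2)] by auto
qed

section \<open>zero morphisms\<close>

lemma zero_obj: "is_zero_object C z \<Longrightarrow> z \<in> obj C"
  unfolding is_zero_object_def by (elim conjE)

lemma zero_to: "is_zero_object C z \<Longrightarrow> a \<in> obj C \<Longrightarrow> \<exists>!f. f \<in> hom C a z"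
  unfolding is_zero_object_def by (elim conjE) blast

lemma zero_from: "is_zero_object C z \<Longrightarrow> a \<in> obj C \<Longrightarrow> \<exists>!f. f \<in> hom C z a"
  unfolding is_zero_object_def by (elim conjE) blast

lemma zero_to_eq: "is_zero_object C z \<Longrightarrow> a \<in> obj C \<Longrightarrow> f \<in> hom C a z \<Longrightarrow> g \<in> hom C a z \<Longrightarrow> f = g"
  using zero_to by blast

lemma zero_from_eq: "is_zero_object C z \<Longrightarrow> a \<in> obj C \<Longrightarrow> f \<in> hom C z a \<Longrightarrow> g \<in> hom C z a \<Longrightarrow> f = g"
  using zero_from by blast

lemma zero_indep:
  assumes "is_zero_object C z" "is_zero_object C z'" "a \<in> obj C"
    "g \<in> hom C a z" "h \<in> hom C z b" "g' \<in> hom C a z'" "h' \<in> hom C z' b"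
  shows "cmp C h g = cmp C h' g'"
proof -
  have zo1: "z \<in> obj C" "z' \<in> obj C" using assms zero_obj by auto
  obtain e where e: "e \<in> hom C z z'" using zero_to[OF assms(2) zo1(1)] by blast
  have b: "b \<in> obj C" using hom_obj[OF assms(5)] by auto
  have 1: "cmp C e g = g'"
    by (rule zero_to_eq[OF assms(2,3) comp_hom[OF assms(4) e] assms(6)])
  have 2: "cmp C h' e = h"
    by (rule zero_from_eq[OF assms(1) b comp_hom[OF e assms(7)] assms(5)])
  show ?thesis using assoc[OF assms(4) e assms(7)] 1 2 by simp
qed

lemma zmor_eq:
  assumes "is_zero_object C z" "a \<in> obj C" "g \<in> hom C a z" "h \<in> hom C z b"
  shows "zmor C a b = cmp C h g"
proof -
  have ex: "\<exists>!f. f \<in> hom C a b \<and>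
     (\<exists>z g h. is_zero_object C z \<and> g \<in> hom C a z \<and> h \<in> hom C z b \<and> f = cmp C h g)"
  proof
    show "cmp C h g \<in> hom C a b \<and>
     (\<exists>z g' h'. is_zero_object C z \<and> g' \<in> hom C a z \<and> h' \<in> hom C z b \<and> cmp C h g = cmp C h' g')"
      using assms comp_hom by blast
  next
    fix f assume "f \<in> hom C a b \<and>
     (\<exists>z g h. is_zero_object C z \<and> g \<in> hom C a z \<and> h \<in> hom C z b \<and> f = cmp C h g)"
    then obtain z1 g1 h1 where "is_zero_object C z1" "g1 \<in> hom C a z1" "h1 \<in> hom C z1 b" "f = cmp C h1 g1"
      by blast
    then show "f = cmp C h g" using zero_indep[OF _ assms(1,2) _ _ assms(3,4)] by simp
  qed
  show ?thesis unfolding zmor_def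
    by (rule the1_equality[OF ex]) (use assms comp_hom in blast)
qed

lemma zmor_ex:
  assumes "a \<in> obj C" "b \<in> obj C"
  obtains z g h where "is_zero_object C z" "g \<in> hom C a z" "h \<in> hom C z b" "zmor C a b = cmp C h g"
proof -
  obtain z where z: "is_zero_object C z" using zo unfolding has_zero_object_def by blast
  obtain g where g: "g \<in> hom C a z" using zero_to[OF z assms(1)] by blast
  obtain h where h: "h \<in> hom C z b" using zero_from[OF z assms(2)] by blast
  show ?thesis using that[OF z g h] zmor_eq[OF z assms(1) g h] by blast
qed

lemma zmor_hom: "a \<in> obj C \<Longrightarrow> b \<in> obj C \<Longrightarrow> zmor C a b \<in> hom C a b"
  by (metis zmor_ex comp_hom)

lemma zmor_left:
  assumes "f \<in> hom C b c" "a \<in> obj C"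
  shows "cmp C f (zmor C a b) = zmor C a c"
proof -
  have b: "b \<in> obj C" using hom_obj[OF assms(1)] by auto
  obtain z g h where zz: "is_zero_object C z" "g \<in> hom C a z" "h \<in> hom C z b" "zmor C a b = cmp C h g"
    using zmor_ex[OF assms(2) b] by blast
  show ?thesis using zz assoc[OF zz(2) zz(3) assms(1)] zmor_eq[OF zz(1) assms(2) zz(2) comp_hom[OF zz(3) assms(1)]]
    by simp
qed

lemma zmor_right:
  assumes "f \<in> hom C a b" "c \<in> obj C"
  shows "cmp C (zmor C b c) f = zmor C a c"
proof -
  have ab: "a \<in> obj C" "b \<in> obj C" using hom_obj[OF assms(1)] by auto
  obtain z g h where zz: "is_zero_object C z" "g \<in> hom C b z" "h \<in> hom C z c" "zmor C b c = cmp C h g"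
    using zmor_ex[OF ab(2) assms(2)] by blast
  show ?thesis using zz assoc[OF assms(1) zz(2) zz(3)] zmor_eq[OF zz(1) ab(1) comp_hom[OF assms(1) zz(2)] zz(3)]
    by simp
qed


section \<open>induced maps\<close>

abbreviation "IM k l f \<equiv> indmap C X Pw ins k l f"
abbreviation "GA k l f x \<equiv> gact C X Pw ins k l f x"
abbreviation "RP n \<equiv> rpow C X Pw ins r n"
abbreviation "CP k Y h \<equiv> copair C Pw ins k Y h"
abbreviation "CP2 Y f g \<equiv> copair2 C Pw ins Y f g"
abbreviation "ZM a b \<equiv> zmor C a b"

lemma ZM_hom: "ZM X (Pw l) \<in> hom C X (Pw l)"
  by (rule zmor_hom[OF Xobj Pw_obj])

lemma indmap:
  assumes "pmp k l f"
  shows "IM k l f \<in> hom C (Pw k) (Pw l) \<and>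
    (\<forall>i\<in>{1..k}. cmp C (IM k l f) (ins k i) = (if f i = 0 then ZM X (Pw l) else ins l (f i)))"
proof -
  have "\<forall>i\<in>{1..k}. (if f i = 0 then ZM X (Pw l) else ins l (f i)) \<in> hom C X (Pw l)"
  proof
    fix i assume i: "i \<in> {1..k}"
    show "(if f i = 0 then ZM X (Pw l) else ins l (f i)) \<in> hom C X (Pw l)"
    proof (cases "f i = 0")
      case True then show ?thesis using ZM_hom by simp
    next
      case False
      then have "f i \<in> {1..l}" using assms i unfolding pmp_def by auto
      then show ?thesis using False ins_hom by simp
    qed
  qed
  then show ?thesis unfolding indmap_def by (rule copair[OF Pw_obj])
qed

lemma indmap_hom: "pmp k l f \<Longrightarrow> IM k l f \<in> hom C (Pw k) (Pw l)"
  using indmap by blast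

lemma indmap_ins: "pmp k l f \<Longrightarrow> i \<in> {1..k} \<Longrightarrow>
   cmp C (IM k l f) (ins k i) = (if f i = 0 then ZM X (Pw l) else ins l (f i))"
  using indmap by blast

lemma indmap_cong: "\<forall>x\<in>{1..k}. f x = g x \<Longrightarrow> IM k l f = IM k l g"
  unfolding indmap_def by (rule copair_cong) simp

lemma pmp_cmpf: "pmp k l f \<Longrightarrow> pmp l m g \<Longrightarrow> pmp k m (cmpf f g)"
  unfolding pmp_def cmpf_def by (auto simp: Suc_le_eq)

lemma comp_indmap:
  assumes h: "h \<in> hom C (Pw l) Y" and g: "pmp k l g"
  shows "cmp C h (IM k l g) = CP k Y (\<lambda>i. if g i = 0 then ZM X Y else cmp C h (ins l (g i)))"
proof (rule sym, rule copair_unique)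
  show "cmp C h (IM k l g) \<in> hom C (Pw k) Y" by (rule comp_hom[OF indmap_hom[OF g] h])
  have Y: "Y \<in> obj C" using hom_obj[OF h] by simp
  show "\<forall>i\<in>{1..k}. cmp C (cmp C h (IM k l g)) (ins k i) =
        (if g i = 0 then ZM X Y else cmp C h (ins l (g i)))"
  proof
    fix i assume i: "i \<in> {1..k}"
    have "cmp C (cmp C h (IM k l g)) (ins k i) = cmp C h (cmp C (IM k l g) (ins k i))"
      using assoc[OF ins_hom[OF i] indmap_hom[OF g] h] by simp
    also have "\<dots> = (if g i = 0 then ZM X Y else cmp C h (ins l (g i)))"
      using indmap_ins[OF g i] zmor_left[OF h Xobj] by simp
    finally show "cmp C (cmp C h (IM k l g)) (ins k i) =
        (if g i = 0 then ZM X Y else cmp C h (ins l (g i)))" .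
  qed
qed

lemma indmap_comp:
  assumes f: "pmp k l f" and g: "pmp l m g"
  shows "cmp C (IM l m g) (IM k l f) = IM k m (cmpf f g)"
proof (rule hom_ext)
  show "cmp C (IM l m g) (IM k l f) \<in> hom C (Pw k) (Pw m)"
    by (rule comp_hom[OF indmap_hom[OF f] indmap_hom[OF g]])
  show "IM k m (cmpf f g) \<in> hom C (Pw k) (Pw m)"
    by (rule indmap_hom[OF pmp_cmpf[OF f g]])
  show "\<forall>i\<in>{1..k}. cmp C (cmp C (IM l m g) (IM k l f)) (ins k i) = cmp C (IM k m (cmpf f g)) (ins k i)"
  proof
    fix i assume i: "i \<in> {1..k}"
    have "cmp C (cmp C (IM l m g) (IM k l f)) (ins k i) = cmp C (IM l m g) (cmp C (IM k l f) (ins k i))"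
      using assoc[OF ins_hom[OF i] indmap_hom[OF f] indmap_hom[OF g]] by simp
    also have "\<dots> = cmp C (IM k m (cmpf f g)) (ins k i)"
    proof (cases "f i = 0")
      case True
      then show ?thesis using indmap_ins[OF f i] indmap_ins[OF pmp_cmpf[OF f g] i]
          zmor_left[OF indmap_hom[OF g] Xobj] by (simp add: cmpf_def)
    next
      case False
      then have fi: "f i \<in> {1..l}" using f i unfolding pmp_def by auto
      show ?thesis using False indmap_ins[OF f i] indmap_ins[OF pmp_cmpf[OF f g] i]
          indmap_ins[OF g fi] by (simp add: cmpf_def)
    qed
    finally show "cmp C (cmp C (IM l m g) (IM k l f)) (ins k i) = cmp C (IM k m (cmpf f g)) (ins k i)" .
  qed
qed

lemma gact_hom: "pmp k l f \<Longrightarrow> x \<in> hom C X (Pw k) \<Longrightarrow> GA k l f x \<in> hom C X (Pw l)"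
  unfolding gact_def by (rule comp_hom[OF _ indmap_hom])

lemma gact_comp:
  assumes f: "pmp k l f" and g: "pmp l m g" and x: "x \<in> hom C X (Pw k)"
  shows "GA l m g (GA k l f x) = GA k m (cmpf f g) x"
  unfolding gact_def using assoc[OF x indmap_hom[OF f] indmap_hom[OF g]] indmap_comp[OF f g] by simp

lemma gact_cong: "\<forall>x\<in>{1..k}. f x = g x \<Longrightarrow> GA k l f y = GA k l g y"
  unfolding gact_def using indmap_cong by metis

lemma IM1:
  assumes a: "pmp 1 k a"
  shows "IM 1 k a = (if a 1 = 0 then ZM X (Pw k) else ins k (a 1))"
  unfolding indmap_def
proof (rule copair_unique)
  have "(if a 1 = 0 then ZM X (Pw k) else ins k (a 1)) \<in> hom C X (Pw k)"
    using ZM_hom ins_hom a unfolding pmp_def by auto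
  then show h: "(if a 1 = 0 then ZM X (Pw k) else ins k (a 1)) \<in> hom C (Pw 1) (Pw k)" using Pw1 by simp
  show "\<forall>i\<in>{1..1}. cmp C (if a 1 = 0 then ZM X (Pw k) else ins k (a 1)) (ins 1 i) =
           (if a i = 0 then ZM X (Pw k) else ins k (a i))"
    using id_right[OF h] ins11 Pw1 by auto
qed

section \<open>powers of r\<close>

definition blk :: "nat \<Rightarrow> nat \<Rightarrow> nat \<Rightarrow> nat" where
  "blk n j = (\<lambda>i. if i = 0 then 0 else (j - 1) * 2 ^ n + i)"

lemma rpow_Suc': "RP (Suc n) = cmp C (CP 2 (Pw (2 * 2 ^ n)) (\<lambda>j. GA (2 ^ n) (2 * 2 ^ n) (blk n j) (RP n))) r"
  by (simp add: emul_def blk_def mult.commute)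

lemma pmp_blk: "j \<in> {1..2} \<Longrightarrow> pmp (2 ^ n) (2 * 2 ^ n) (blk n j)"
proof -
  assume "j \<in> {1..2}"
  then have "j = 1 \<or> j = 2" by auto
  then show ?thesis unfolding pmp_def blk_def by auto
qed

lemma rpow_hom: "RP n \<in> hom C X (Pw (2 ^ n))"
proof (induction n)
  case 0 then show ?case using id_hom[OF Xobj] Pw1 by simp
next
  case (Suc n)
  have "CP 2 (Pw (2 * 2 ^ n)) (\<lambda>j. GA (2 ^ n) (2 * 2 ^ n) (blk n j) (RP n)) \<in> hom C (Pw 2) (Pw (2 * 2 ^ n))"
    by (rule copair_hom[OF Pw_obj]) (use gact_hom[OF pmp_blk Suc.IH] in blast)
  then show ?case unfolding rpow_Suc' using comp_hom[OF rhom] by simp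
qed


definition T :: "nat \<Rightarrow> nat \<Rightarrow> (nat \<Rightarrow> nat) \<Rightarrow> 'm" where
  "T k n a = GA (2 ^ n) k a (RP n)"

definition D :: "'o \<Rightarrow> 'm \<Rightarrow> 'm \<Rightarrow> 'm" where
  "D Y A B = cmp C (CP2 Y A B) r"

lemma T_hom: "pmp (2 ^ n) k a \<Longrightarrow> T k n a \<in> hom C X (Pw k)"
  unfolding T_def by (rule gact_hom[OF _ rpow_hom])

lemma T_cong: "\<forall>x\<in>{1..2 ^ n}. a x = b x \<Longrightarrow> T k n a = T k n b"
  unfolding T_def by (rule gact_cong)

lemma copair2_hom: "Y \<in> obj C \<Longrightarrow> A \<in> hom C X Y \<Longrightarrow> B \<in> hom C X Y \<Longrightarrow> CP2 Y A B \<in> hom C (Pw 2) Y"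
  unfolding copair2_def by (rule copair_hom) auto

lemma copair2_nat:
  assumes "g \<in> hom C Y Z" "A \<in> hom C X Y" "B \<in> hom C X Y"
  shows "cmp C g (CP2 Y A B) = CP2 Z (cmp C g A) (cmp C g B)"
  unfolding copair2_def by (subst copair_nat[OF assms(1)]) (use assms in \<open>auto intro!: copair_cong\<close>)

lemma D_hom: "Y \<in> obj C \<Longrightarrow> A \<in> hom C X Y \<Longrightarrow> B \<in> hom C X Y \<Longrightarrow> D Y A B \<in> hom C X Y"
  unfolding D_def by (rule comp_hom[OF rhom copair2_hom])

lemma comp_D:
  assumes "g \<in> hom C Y Z" "A \<in> hom C X Y" "B \<in> hom C X Y"
  shows "cmp C g (D Y A B) = D Z (cmp C g A) (cmp C g B)"
proof -
  have Y: "Y \<in> obj C" using hom_obj[OF assms(1)] by simp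
  show ?thesis unfolding D_def
    using assoc[OF rhom copair2_hom[OF Y assms(2,3)] assms(1)] copair2_nat[OF assms] by simp
qed


lemma pmp_cat2: "pmp (2 ^ n) k a \<Longrightarrow> pmp (2 ^ n) k b \<Longrightarrow> pmp (2 ^ Suc n) k (cat2 n a b)"
  unfolding pmp_def cat2_def
proof (intro ballI)
  fix x :: nat assume a: "\<forall>x\<in>{1..2 ^ n}. a x \<le> k" and b: "\<forall>x\<in>{1..2 ^ n}. b x \<le> k"
    and x: "x \<in> {1..2 ^ Suc n}"
  show "(if x \<le> 2 ^ n then a x else b (x - 2 ^ n)) \<le> k"
  proof (cases "x \<le> 2 ^ n")
    case True then show ?thesis using a x by auto
  next
    case False
    then have "x - 2 ^ n \<in> {1..2 ^ n}" using x by auto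
    then show ?thesis using b False by auto
  qed
qed

lemma T_step:
  assumes a: "pmp (2 ^ n) k a" and b: "pmp (2 ^ n) k b"
  shows "T k (Suc n) (cat2 n a b) = D (Pw k) (T k n a) (T k n b)"
proof -
  let ?c = "cat2 n a b"
  let ?H = "\<lambda>j. GA (2 ^ n) (2 * 2 ^ n) (blk n j) (RP n)"
  have c: "pmp (2 * 2 ^ n) k ?c" using pmp_cat2[OF a b] by simp
  have Hh: "\<forall>j\<in>{1..2}. ?H j \<in> hom C X (Pw (2 * 2 ^ n))"
    using gact_hom[OF pmp_blk rpow_hom] by blast
  have CPh: "CP 2 (Pw (2 * 2 ^ n)) ?H \<in> hom C (Pw 2) (Pw (2 * 2 ^ n))"
    by (rule copair_hom[OF Pw_obj Hh])
  have "T k (Suc n) ?c = cmp C (IM (2 * 2 ^ n) k ?c) (cmp C (CP 2 (Pw (2 * 2 ^ n)) ?H) r)"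
    unfolding T_def gact_def rpow_Suc' by simp
  also have "\<dots> = cmp C (cmp C (IM (2 * 2 ^ n) k ?c) (CP 2 (Pw (2 * 2 ^ n)) ?H)) r"
    by (rule assoc[OF rhom CPh indmap_hom[OF c]])
  also have "cmp C (IM (2 * 2 ^ n) k ?c) (CP 2 (Pw (2 * 2 ^ n)) ?H) =
      CP 2 (Pw k) (\<lambda>j. cmp C (IM (2 * 2 ^ n) k ?c) (?H j))"
    by (rule copair_nat[OF indmap_hom[OF c] Hh])
  also have "\<dots> = CP2 (Pw k) (T k n a) (T k n b)"
    unfolding copair2_def
  proof (rule copair_cong, rule ballI)
    fix j :: nat assume j: "j \<in> {1..2}"
    have "cmp C (IM (2 * 2 ^ n) k ?c) (?H j) = GA (2 ^ n) k (cmpf (blk n j) ?c) (RP n)"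
      using gact_comp[OF pmp_blk[OF j] c rpow_hom] unfolding gact_def by simp
    also have "\<dots> = (if j = 1 then T k n a else T k n b)"
    proof -
      have "j = 1 \<or> j = 2" using j by auto
      then show ?thesis
      proof
        assume j1: "j = 1"
        have "\<forall>x\<in>{1..2 ^ n}. cmpf (blk n j) ?c x = a x" using j1 by (auto simp: cmpf_def blk_def cat2_def)
        then show ?thesis unfolding T_def using j1 gact_cong by metis
      next
        assume j2: "j = 2"
        have "\<forall>x\<in>{1..2 ^ n}. cmpf (blk n j) ?c x = b x" using j2 by (auto simp: cmpf_def blk_def cat2_def)
        then show ?thesis unfolding T_def using j2 gact_cong by (metis numeral_eq_one_iff semiring_norm(85))
      qed
    qed
    finally show "cmp C (IM (2 * 2 ^ n) k ?c) (?H j) = (if j = 1 then T k n a else T k n b)" .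
  qed
  finally show ?thesis unfolding D_def .
qed

lemma T0: "pmp 1 k a \<Longrightarrow> T k 0 a = (if a 1 = 0 then ZM X (Pw k) else ins k (a 1))"
  unfolding T_def gact_def using id_right[OF indmap_hom, of 1 k a] Pw1 IM1 by simp

lemma T_zero: "T k n (\<lambda>_. 0) = ZM X (Pw k)"
proof -
  have z: "pmp (2 ^ n) k (\<lambda>_. 0)" unfolding pmp_def by simp
  have "IM (2 ^ n) k (\<lambda>_. 0) = ZM (Pw (2 ^ n)) (Pw k)"
  proof (rule hom_ext[OF indmap_hom[OF z] zmor_hom[OF Pw_obj Pw_obj]], rule ballI)
    fix i :: nat assume i: "i \<in> {1..2 ^ n}"
    show "cmp C (IM (2 ^ n) k (\<lambda>_. 0)) (ins (2 ^ n) i) = cmp C (ZM (Pw (2 ^ n)) (Pw k)) (ins (2 ^ n) i)"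
      using indmap_ins[OF z i] zmor_right[OF ins_hom[OF i] Pw_obj] by simp
  qed
  then show ?thesis unfolding T_def gact_def using zmor_right[OF rpow_hom Pw_obj] by simp
qed

lemma ins11': "ins (Suc 0) (Suc 0) = idm C X" using ins11 by simp

lemma fdl1: "GA 2 1 (pmap 2 2) r = idm C X"
  using fdl unfolding formal_difference_law_def by blast

lemma IM_p22: "IM 2 1 (pmap 2 2) = CP2 X (idm C X) (ZM X X)"
  unfolding indmap_def copair2_def Pw1
  by (intro copair_cong) (auto simp: pmap_def ins11' numeral_2_eq_2 le_Suc_eq)

lemma IM_p21: "IM 2 1 (pmap 2 1) = CP2 X (ZM X X) (idm C X)"
  unfolding indmap_def copair2_def Pw1
  by (intro copair_cong) (auto simp: pmap_def ins11' numeral_2_eq_2 le_Suc_eq)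

lemma D_zero_right:
  assumes A: "A \<in> hom C X Y"
  shows "D Y A (ZM X Y) = A"
proof -
  have "D Y A (ZM X Y) = cmp C A (D X (idm C X) (ZM X X))"
    using comp_D[OF A id_hom[OF Xobj] zmor_hom[OF Xobj Xobj]] id_right[OF A] zmor_left[OF A Xobj] by simp
  also have "D X (idm C X) (ZM X X) = idm C X"
    using fdl1 IM_p22 unfolding D_def gact_def by simp
  finally show ?thesis using id_right[OF A] by simp
qed

definition nu :: 'm where "nu = GA 2 1 (pmap 2 1) r"

lemma nu_D: "nu = D X (ZM X X) (idm C X)"
  unfolding nu_def gact_def D_def IM_p21 ..

lemma nu_hom: "nu \<in> hom C X X"
  unfolding nu_D by (rule D_hom[OF Xobj zmor_hom[OF Xobj Xobj] id_hom[OF Xobj]])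

lemma ins_nu: "i \<in> {1..k} \<Longrightarrow> cmp C (ins k i) nu = D (Pw k) (ZM X (Pw k)) (ins k i)"
  unfolding nu_D using comp_D[OF ins_hom zmor_hom[OF Xobj Xobj] id_hom[OF Xobj]]
    zmor_left[OF ins_hom Xobj] id_right[OF ins_hom] by simp


section \<open>the coaddition w\<close>

definition w :: 'm where "w = GA 3 2 (pmap 3 2) (GA 4 3 (pmap 4 2) (RP 2))"

lemma CP2_ins:
  assumes "Y \<in> obj C" "A \<in> hom C X Y" "B \<in> hom C X Y"
  shows "cmp C (CP2 Y A B) (ins 2 1) = A" "cmp C (CP2 Y A B) (ins 2 2) = B"
proof -
  have h: "\<forall>i\<in>{1..2}. (if i = 1 then A else B) \<in> hom C X Y" using assms by auto
  show "cmp C (CP2 Y A B) (ins 2 1) = A" unfolding copair2_def using copair_ins[OF assms(1) h, of 1] by simp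
  show "cmp C (CP2 Y A B) (ins 2 2) = B" unfolding copair2_def using copair_ins[OF assms(1) h, of 2] by simp
qed

definition sel :: "'o \<Rightarrow> 'm \<Rightarrow> 'm \<Rightarrow> nat \<Rightarrow> 'm" where
  "sel Y A B x = (if x = 0 then ZM X Y else if x = 1 then A else B)"

lemma CP2_IM:
  assumes Y: "Y \<in> obj C" and A: "A \<in> hom C X Y" and B: "B \<in> hom C X Y" and g: "pmp 2 2 g"
  shows "cmp C (CP2 Y A B) (IM 2 2 g) = CP2 Y (sel Y A B (g 1)) (sel Y A B (g 2))"
proof -
  have "cmp C (CP2 Y A B) (IM 2 2 g) = CP 2 Y (\<lambda>i. if g i = 0 then ZM X Y else cmp C (CP2 Y A B) (ins 2 (g i)))"
    by (rule comp_indmap[OF copair2_hom[OF Y A B] g])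
  also have "\<dots> = CP 2 Y (\<lambda>i. if i = 1 then sel Y A B (g 1) else sel Y A B (g 2))"
  proof (rule copair_cong, rule ballI)
    fix i :: nat assume i: "i \<in> {1..2}"
    have gi: "g i \<le> 2" using g i unfolding pmp_def by auto
    have "g i = 0 \<or> g i = 1 \<or> g i = 2" using gi by auto
    moreover have "i = 1 \<or> i = 2" using i by auto
    ultimately show "(if g i = 0 then ZM X Y else cmp C (CP2 Y A B) (ins 2 (g i))) =
          (if i = 1 then sel Y A B (g 1) else sel Y A B (g 2))"
      using CP2_ins[OF Y A B] unfolding sel_def by auto
  qed
  finally show ?thesis unfolding copair2_def .
qed

lemma rp1: "RP 1 = r"
proof -
  have "RP 1 = cmp C (CP 2 (Pw 2) (\<lambda>j. GA 1 2 (blk 0 j) (RP 0))) r"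
    using rpow_Suc'[of 0] by simp
  also have "CP 2 (Pw 2) (\<lambda>j. GA 1 2 (blk 0 j) (RP 0)) = idm C (Pw 2)"
  proof (rule copair_unique[OF id_hom[OF Pw_obj]], rule ballI)
    fix i :: nat assume i: "i \<in> {1..2}"
    have p: "pmp 1 2 (blk 0 i)" using pmp_blk[OF i, of 0] by simp
    have "GA 1 2 (blk 0 i) (RP 0) = IM 1 2 (blk 0 i)"
      unfolding gact_def using id_right[OF indmap_hom[OF p]] Pw1 by simp
    also have "\<dots> = ins 2 i" using IM1[OF p] i by (auto simp: blk_def)
    finally show "cmp C (idm C (Pw 2)) (ins 2 i) = GA 1 2 (blk 0 i) (RP 0)"
      using id_left[OF ins_hom[OF i]] by simp
  qed
  finally show ?thesis using id_left[OF rhom] by simp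
qed

lemma rp2: "RP 2 = cmp C (CP 2 (Pw 4) (\<lambda>j. GA 2 4 (blk 1 j) r)) r"
proof -
  have "RP 2 = RP (Suc 1)" by (simp only: Suc_1)
  also have "\<dots> = cmp C (CP 2 (Pw (2 * 2 ^ 1)) (\<lambda>j. GA (2 ^ 1) (2 * 2 ^ 1) (blk 1 j) (RP 1))) r"
    by (rule rpow_Suc')
  finally show ?thesis unfolding rp1 by (simp del: rpow.simps)
qed

lemma w_eq:
  assumes Y: "Y \<in> obj C" and A: "A \<in> hom C X Y" and B: "B \<in> hom C X Y"
  shows "cg_add C Pw ins w Y A B = D Y A (D Y (ZM X Y) B)"
proof -
  let ?phi = "cmpf (pmap 4 2) (pmap 3 2)"
  let ?H = "\<lambda>j. GA 2 4 (blk 1 j) r"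
  have p42: "pmp 4 3 (pmap 4 2)" and p32: "pmp 3 2 (pmap 3 2)" unfolding pmp_def pmap_def by auto
  have phi: "pmp 4 2 ?phi" by (rule pmp_cmpf[OF p42 p32])
  have R2h: "RP 2 \<in> hom C X (Pw 4)" using rpow_hom[of 2] by simp
  have W: "w = GA 4 2 ?phi (RP 2)" unfolding w_def by (rule gact_comp[OF p42 p32 R2h])
  have pb: "\<And>j. j \<in> {1..2} \<Longrightarrow> pmp 2 4 (blk 1 j)" using pmp_blk[of _ 1] by simp
  have Hh: "\<forall>j\<in>{1..2}. ?H j \<in> hom C X (Pw 4)" using gact_hom[OF pb rhom] by blast
  have CPH: "CP 2 (Pw 4) ?H \<in> hom C (Pw 2) (Pw 4)" by (rule copair_hom[OF Pw_obj Hh])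
  have CP2h: "CP2 Y A B \<in> hom C (Pw 2) Y" by (rule copair2_hom[OF Y A B])
  let ?K = "cmp C (CP2 Y A B) (IM 4 2 ?phi)"
  have Kh: "?K \<in> hom C (Pw 4) Y" by (rule comp_hom[OF indmap_hom[OF phi] CP2h])
  have "cg_add C Pw ins w Y A B = cmp C (CP2 Y A B) (cmp C (IM 4 2 ?phi) (cmp C (CP 2 (Pw 4) ?H) r))"
    unfolding cg_add_def W gact_def rp2 ..
  also have "\<dots> = cmp C ?K (cmp C (CP 2 (Pw 4) ?H) r)"
    by (rule assoc[OF comp_hom[OF rhom CPH] indmap_hom[OF phi] CP2h])
  also have "\<dots> = cmp C (cmp C ?K (CP 2 (Pw 4) ?H)) r"
    by (rule assoc[OF rhom CPH Kh])
  also have "cmp C ?K (CP 2 (Pw 4) ?H) = CP 2 Y (\<lambda>j. cmp C ?K (?H j))"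
    by (rule copair_nat[OF Kh Hh])
  also have "\<dots> = CP 2 Y (\<lambda>j. if j = 1 then A else D Y (ZM X Y) B)"
  proof (rule copair_cong, rule ballI)
    fix j :: nat assume j: "j \<in> {1..2}"
    have g: "pmp 2 2 (cmpf (blk 1 j) ?phi)" by (rule pmp_cmpf[OF pb[OF j] phi])
    have "cmp C ?K (?H j) = cmp C (cmp C ?K (IM 2 4 (blk 1 j))) r"
      unfolding gact_def by (rule assoc[OF rhom indmap_hom[OF pb[OF j]] Kh])
    also have "cmp C ?K (IM 2 4 (blk 1 j)) = cmp C (CP2 Y A B) (cmp C (IM 4 2 ?phi) (IM 2 4 (blk 1 j)))"
      by (rule sym, rule assoc[OF indmap_hom[OF pb[OF j]] indmap_hom[OF phi] CP2h])
    also have "\<dots> = cmp C (CP2 Y A B) (IM 2 2 (cmpf (blk 1 j) ?phi))"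
      using indmap_comp[OF pb[OF j] phi] by simp
    also have "\<dots> = CP2 Y (sel Y A B (cmpf (blk 1 j) ?phi 1)) (sel Y A B (cmpf (blk 1 j) ?phi 2))"
      by (rule CP2_IM[OF Y A B g])
    finally have e: "cmp C ?K (?H j) = D Y (sel Y A B (cmpf (blk 1 j) ?phi 1)) (sel Y A B (cmpf (blk 1 j) ?phi 2))"
      unfolding D_def .
    have "j = 1 \<or> j = 2" using j by auto
    then show "cmp C ?K (?H j) = (if j = 1 then A else D Y (ZM X Y) B)"
    proof
      assume j1: "j = 1"
      have "cmpf (blk 1 j) ?phi 1 = 1" "cmpf (blk 1 j) ?phi 2 = 0" using j1 by (auto simp: cmpf_def blk_def pmap_def)
      then show ?thesis using e j1 D_zero_right[OF A] by (simp add: sel_def)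
    next
      assume j2: "j = 2"
      have "cmpf (blk 1 j) ?phi 1 = 0" "cmpf (blk 1 j) ?phi 2 = 2" using j2 by (auto simp: cmpf_def blk_def pmap_def)
      then show ?thesis using e j2 by (simp add: sel_def)
    qed
  qed
  finally show ?thesis unfolding D_def copair2_def .
qed

lemma w_hom: "w \<in> hom C X (Pw 2)"
proof -
  have p42: "pmp 4 3 (pmap 4 2)" and p32: "pmp 3 2 (pmap 3 2)" unfolding pmp_def pmap_def by auto
  have R2h: "RP 2 \<in> hom C X (Pw 4)" using rpow_hom[of 2] by simp
  show ?thesis unfolding w_def by (rule gact_hom[OF p32 gact_hom[OF p42 R2h]])
qed


section \<open>using the axioms (3) and (4)\<close>

lemma fdl3: "1 \<le> n \<Longrightarrow> special_perm n \<pi> \<Longrightarrow> GA (2 ^ n) (2 ^ n) \<pi> (RP n) = RP n"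
  using fdl unfolding formal_difference_law_def by blast

lemma fdl4:
  assumes "1 \<le> n" "1 \<le> i" "i < j" "j \<le> 2 ^ n"
    "(in_Aplus n i \<and> in_Aminus n j) \<or> (in_Aminus n i \<and> in_Aplus n j)"
    "1 \<le> l" "l \<le> 2 ^ n - 1"
  shows "GA (2 ^ n) (2 ^ n - 1) (smap (2 ^ n) i j l) (RP n) =
        GA (2 ^ n - 2) (2 ^ n - 1) (dmap (2 ^ n - 1) l)
          (GA (2 ^ n - 1) (2 ^ n - 2) (pmap (2 ^ n - 1) i)
            (GA (2 ^ n) (2 ^ n - 1) (pmap (2 ^ n) j) (RP n)))"
proof -
  have "\<forall>k \<ge> 1. \<forall>i j l. 1 \<le> i \<and> i < j \<and> j \<le> 2 ^ k \<and>
        ((in_Aplus k i \<and> in_Aminus k j) \<or> (in_Aminus k i \<and> in_Aplus k j)) \<and>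
        1 \<le> l \<and> l \<le> 2 ^ k - 1 \<longrightarrow>
        GA (2 ^ k) (2 ^ k - 1) (smap (2 ^ k) i j l) (RP k) =
        GA (2 ^ k - 2) (2 ^ k - 1) (dmap (2 ^ k - 1) l)
          (GA (2 ^ k - 1) (2 ^ k - 2) (pmap (2 ^ k - 1) i)
            (GA (2 ^ k) (2 ^ k - 1) (pmap (2 ^ k) j) (RP k)))"
    using fdl unfolding formal_difference_law_def by (elim conjE)
  then show ?thesis using assms by blast
qed

lemma perm_T:
  assumes n: "1 \<le> n" and p: "special_perm n \<pi>" and a: "pmp (2 ^ n) k a"
  shows "T k n (\<lambda>x. a (\<pi> x)) = T k n a"
proof -
  have bij: "bij_betw \<pi> {1..2 ^ n} {1..2 ^ n}" using p unfolding special_perm_def by blast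
  have pin: "\<And>x. x \<in> {1..2 ^ n} \<Longrightarrow> \<pi> x \<in> {1..2 ^ n}" using bij_betw_apply[OF bij] by blast
  have pp: "pmp (2 ^ n) (2 ^ n) \<pi>" unfolding pmp_def using pin by auto
  have "T k n a = GA (2 ^ n) k a (GA (2 ^ n) (2 ^ n) \<pi> (RP n))" unfolding T_def fdl3[OF n p] ..
  also have "\<dots> = GA (2 ^ n) k (cmpf \<pi> a) (RP n)" by (rule gact_comp[OF pp a rpow_hom])
  also have "\<dots> = T k n (\<lambda>x. a (\<pi> x))" unfolding T_def
    by (rule gact_cong) (use pin in \<open>fastforce simp: cmpf_def\<close>)
  finally show ?thesis by simp
qed

lemma smap_iji: "1 \<le> i \<Longrightarrow> i < j \<Longrightarrow> 1 \<le> x \<Longrightarrow>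
    smap N i j i x = (if x = j then i else if x < j then x else x - 1)"
proof -
  assume i: "1 \<le> i" and ij: "i < j" and x: "1 \<le> x"
  show ?thesis
  proof (cases "x = i \<or> x = j")
    case True then show ?thesis using x ij unfolding smap_def by auto
  next
    case False
    have c: "card {y \<in> {i, j}. y < x} = (if x < i then 0 else if x < j then 1 else 2)"
    proof -
      have "x < i \<Longrightarrow> {y \<in> {i, j}. y < x} = {}" using ij by auto
      moreover have "i < x \<Longrightarrow> x < j \<Longrightarrow> {y \<in> {i, j}. y < x} = {i}" by auto
      moreover have "j < x \<Longrightarrow> {y \<in> {i, j}. y < x} = {i, j}" using ij by auto
      ultimately show ?thesis using False ij by (auto simp: card_insert_if)
    qed
    show ?thesis using False x ij i unfolding smap_def Let_def c by auto
  qed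
qed

lemma cancel_T:
  assumes n: "1 \<le> n" and a: "pmp (2 ^ n) k a" and i: "1 \<le> i" and ij: "i < j" and j: "j \<le> 2 ^ n"
    and sg: "(in_Aplus n i \<and> in_Aminus n j) \<or> (in_Aminus n i \<and> in_Aplus n j)"
    and aij: "a i = a j"
  shows "T k n (\<lambda>x. if x = i \<or> x = j then 0 else a x) = T k n a"
proof -
  define N where "N = (2::nat) ^ n"
  have N2: "2 \<le> N" unfolding N_def using n by (metis power_increasing power_one_right numeral_le_iff semiring_norm(69) zero_less_numeral one_le_numeral)
  define a' where "a' = (\<lambda>y. if y = 0 then 0 else if y < j then a y else a (Suc y))"
  let ?s = "smap N i j i"
  let ?p' = "pmap N j"
  let ?p = "pmap (N - 1) i"
  let ?d = "dmap (N - 1) i"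
  have aN: "pmp N k a" using a unfolding N_def .
  have ps: "pmp N (N - 1) ?s" unfolding pmp_def using smap_iji[OF i ij] ij j i unfolding N_def by auto
  have pa': "pmp (N - 1) k a'" using aN unfolding pmp_def a'_def by auto
  have pp': "pmp N (N - 1) ?p'" unfolding pmp_def pmap_def using j unfolding N_def by auto
  have pp: "pmp (N - 1) (N - 2) ?p" unfolding pmp_def pmap_def using ij j unfolding N_def by auto
  have pd: "pmp (N - 2) (N - 1) ?d" unfolding pmp_def dmap_def using N2 by auto
  have R: "RP n \<in> hom C X (Pw N)" using rpow_hom unfolding N_def .
  have R1: "GA N (N - 1) ?p' (RP n) \<in> hom C X (Pw (N - 1))" by (rule gact_hom[OF pp' R])
  have R2: "GA (N - 1) (N - 2) ?p (GA N (N - 1) ?p' (RP n)) \<in> hom C X (Pw (N - 2))" by (rule gact_hom[OF pp R1])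
  have F: "GA N (N - 1) ?s (RP n) = GA (N - 2) (N - 1) ?d (GA (N - 1) (N - 2) ?p (GA N (N - 1) ?p' (RP n)))"
    unfolding N_def by (rule fdl4[OF n i ij j sg i]) (use ij j in \<open>auto simp: N_def\<close>)
  have "T k n a = GA N k a (RP n)" unfolding T_def N_def ..
  also have "\<dots> = GA N k (cmpf ?s a') (RP n)"
    by (rule gact_cong) (use aij ij i in \<open>auto simp: cmpf_def a'_def smap_iji\<close>)
  also have "\<dots> = GA (N - 1) k a' (GA N (N - 1) ?s (RP n))" by (rule gact_comp[OF ps pa' R, symmetric])
  also have "\<dots> = GA (N - 2) k (cmpf ?d a') (GA (N - 1) (N - 2) ?p (GA N (N - 1) ?p' (RP n)))"
    unfolding F by (rule gact_comp[OF pd pa' R2])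
  also have "\<dots> = GA (N - 1) k (cmpf ?p (cmpf ?d a')) (GA N (N - 1) ?p' (RP n))"
    by (rule gact_comp[OF pp pmp_cmpf[OF pd pa'] R1])
  also have "\<dots> = GA N k (cmpf ?p' (cmpf ?p (cmpf ?d a'))) (RP n)"
    by (rule gact_comp[OF pp' pmp_cmpf[OF pp pmp_cmpf[OF pd pa']] R])
  also have "\<dots> = GA N k (\<lambda>x. if x = i \<or> x = j then 0 else a x) (RP n)"
  proof (rule gact_cong)
    have e: "\<And>x. j < x \<Longrightarrow> Suc (Suc (x - Suc (Suc 0))) = x" using ij i by auto
    show "\<forall>x\<in>{1..N}. cmpf ?p' (cmpf ?p (cmpf ?d a')) x = (if x = i \<or> x = j then 0 else a x)"
      using ij i by (auto simp: cmpf_def a'_def pmap_def dmap_def e)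
  qed
  finally show ?thesis unfolding T_def N_def by simp
qed


lemma cancel_T':
  assumes n: "1 \<le> n" and a: "pmp (2 ^ n) k a" and i: "in_Aplus n i" and j: "in_Aminus n j"
    and aij: "a i = a j"
  shows "T k n (\<lambda>x. if x = i \<or> x = j then 0 else a x) = T k n a"
proof -
  have ij: "i \<noteq> j" using i j by (auto simp: in_Aplus_def in_Aminus_def)
  have ib: "1 \<le> i" "i \<le> 2 ^ n" and jb: "1 \<le> j" "j \<le> 2 ^ n" using i j by (auto simp: in_Aplus_def in_Aminus_def)
  show ?thesis
  proof (cases "i < j")
    case True
    show ?thesis by (rule cancel_T[OF n a ib(1) True jb(2)]) (use i j aij in auto)
  next
    case False
    then have ji: "j < i" using ij by simp
    have "T k n (\<lambda>x. if x = j \<or> x = i then 0 else a x) = T k n a"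
      by (rule cancel_T[OF n a jb(1) ji ib(2)]) (use i j aij in auto)
    moreover have "(\<lambda>x. if x = j \<or> x = i then 0 else a x) = (\<lambda>x. if x = i \<or> x = j then 0 else a x)"
      by auto
    ultimately show ?thesis by simp
  qed
qed

lemma reduce:
  assumes n: "1 \<le> n"
  shows "pmp (2 ^ n) k a \<Longrightarrow> \<exists>b. pmp (2 ^ n) k b \<and> red n b \<and> sig n b = sig n a \<and> T k n b = T k n a"
proof (induction "card {x\<in>{1..2 ^ n}. a x \<noteq> 0}" arbitrary: a rule: less_induct)
  case less
  show ?case
  proof (cases "red n a")
    case True then show ?thesis using less.prems by blast
  next
    case False
    then obtain i j where i: "in_Aplus n i" and j: "in_Aminus n j" and aij: "a i = a j" and ai: "a i \<noteq> 0"
      unfolding red_def by blast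
    define a2 where "a2 = (\<lambda>x. if x = i \<or> x = j then 0 else a x)"
    have p2: "pmp (2 ^ n) k a2" using less.prems unfolding pmp_def a2_def by auto
    have iS: "i \<in> {1..2 ^ n}" using i by (auto simp: in_Aplus_def)
    have sub: "{x\<in>{1..2 ^ n}. a2 x \<noteq> 0} \<subseteq> {x\<in>{1..2 ^ n}. a x \<noteq> 0} - {i}" unfolding a2_def by auto
    have "card {x\<in>{1..2 ^ n}. a2 x \<noteq> 0} \<le> card ({x\<in>{1..2 ^ n}. a x \<noteq> 0} - {i})"
      by (rule card_mono[OF _ sub]) simp
    also have "\<dots> < card {x\<in>{1..2 ^ n}. a x \<noteq> 0}"
      by (rule card_Diff1_less) (use iS ai in simp_all)
    finally have lt: "card {x\<in>{1..2 ^ n}. a2 x \<noteq> 0} < card {x\<in>{1..2 ^ n}. a x \<noteq> 0}" .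
    obtain b where b: "pmp (2 ^ n) k b" "red n b" "sig n b = sig n a2" "T k n b = T k n a2"
      using less.hyps[OF lt p2] by blast
    have "sig n a2 = sig n a" unfolding a2_def by (rule sig_cancel[OF i j aij])
    moreover have "T k n a2 = T k n a" unfolding a2_def by (rule cancel_T'[OF n less.prems i j aij])
    ultimately show ?thesis using b by auto
  qed
qed

lemma A0:
  assumes n: "1 \<le> n" and a: "pmp (2 ^ n) k a" and b: "pmp (2 ^ n) k b" and s: "sig n a = sig n b"
  shows "T k n a = T k n b"
proof -
  obtain a' where a': "pmp (2 ^ n) k a'" "red n a'" "sig n a' = sig n a" "T k n a' = T k n a"
    using reduce[OF n a] by blast
  obtain b' where b': "pmp (2 ^ n) k b'" "red n b'" "sig n b' = sig n b" "T k n b' = T k n b"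
    using reduce[OF n b] by blast
  have sab: "sig n a' = sig n b'" using a'(3) b'(3) s by simp
  define P where "P = {x. in_Aplus n x}"
  define M where "M = {x. in_Aminus n x}"
  have PS: "P \<subseteq> {1..2 ^ n}" and MS: "M \<subseteq> {1..2 ^ n}" unfolding P_def M_def by (auto simp: in_Aplus_def in_Aminus_def)
  have finP: "finite P" and finM: "finite M" using PS MS finite_subset by auto
  have PM: "P \<union> M = {1..2 ^ n}" unfolding P_def M_def by (auto simp: in_Aplus_def in_Aminus_def)
  have PMd: "P \<inter> M = {}" unfolding P_def M_def by (auto simp: in_Aplus_def in_Aminus_def)
  have eqP: "\<forall>y. y \<noteq> 0 \<longrightarrow> card {x\<in>P. a' x = y} = card {x\<in>P. b' x = y}"
  proof (intro allI impI)
    fix y :: nat assume y: "y \<noteq> 0"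
    have "{x\<in>P. a' x = y} = {x. in_Aplus n x \<and> a' x = y}" "{x\<in>P. b' x = y} = {x. in_Aplus n x \<and> b' x = y}"
      unfolding P_def by auto
    then show "card {x\<in>P. a' x = y} = card {x\<in>P. b' x = y}"
      using red_fib[OF a'(2) y] red_fib[OF b'(2) y] sab by simp
  qed
  have eqM: "\<forall>y. y \<noteq> 0 \<longrightarrow> card {x\<in>M. a' x = y} = card {x\<in>M. b' x = y}"
  proof (intro allI impI)
    fix y :: nat assume y: "y \<noteq> 0"
    have "{x\<in>M. a' x = y} = {x. in_Aminus n x \<and> a' x = y}" "{x\<in>M. b' x = y} = {x. in_Aminus n x \<and> b' x = y}"
      unfolding M_def by auto
    then show "card {x\<in>M. a' x = y} = card {x\<in>M. b' x = y}"
      using red_fib[OF a'(2) y] red_fib[OF b'(2) y] sab by simp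
  qed
  have bdP: "\<forall>x\<in>P. a' x \<le> k" "\<forall>x\<in>P. b' x \<le> k" using a'(1) b'(1) PS unfolding pmp_def by auto
  have bdM: "\<forall>x\<in>M. a' x \<le> k" "\<forall>x\<in>M. b' x \<le> k" using a'(1) b'(1) MS unfolding pmp_def by auto
  have allP: "\<forall>y. card {x\<in>P. a' x = y} = card {x\<in>P. b' x = y}"
    using eqP zero_fib[OF finP bdP eqP] by metis
  have allM: "\<forall>y. card {x\<in>M. a' x = y} = card {x\<in>M. b' x = y}"
    using eqM zero_fib[OF finM bdM eqM] by metis
  obtain pP where pP: "bij_betw pP P P" "\<forall>x\<in>P. a' (pP x) = b' x" using fiber_perm[OF finP allP] by blast
  obtain pM where pM: "bij_betw pM M M" "\<forall>x\<in>M. a' (pM x) = b' x" using fiber_perm[OF finM allM] by blast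
  define \<pi> where "\<pi> x = (if x \<in> P then pP x else if x \<in> M then pM x else x)" for x
  have bP: "bij_betw \<pi> P P" using pP(1) by (rule bij_betw_cong[THEN iffD1, rotated]) (auto simp: \<pi>_def)
  have bM: "bij_betw \<pi> M M" using pM(1) PMd by (intro bij_betw_cong[THEN iffD1, OF _ pM(1)]) (auto simp: \<pi>_def)
  have bPM: "bij_betw \<pi> (P \<union> M) (P \<union> M)" by (rule bij_betw_combine[OF bP bM PMd])
  have sp: "special_perm n \<pi>"
    unfolding special_perm_def
  proof (intro conjI)
    show "\<pi> 0 = 0" unfolding \<pi>_def P_def M_def by (auto simp: in_Aplus_def in_Aminus_def)
    show "bij_betw \<pi> {1..2 ^ n} {1..2 ^ n}" using bPM PM by simp
    show "\<pi> ` {i. in_Aplus n i} = {i. in_Aplus n i}" using bij_betw_imp_surj_on[OF bP] unfolding P_def .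
    show "\<pi> ` {i. in_Aminus n i} = {i. in_Aminus n i}" using bij_betw_imp_surj_on[OF bM] unfolding M_def .
  qed
  have "T k n b' = T k n (\<lambda>x. a' (\<pi> x))"
  proof (rule T_cong, rule ballI)
    fix x :: nat assume "x \<in> {1..2 ^ n}"
    then have "x \<in> P \<or> x \<in> M" using PM by auto
    then show "b' x = a' (\<pi> x)" using pP(2) pM(2) PMd unfolding \<pi>_def by auto
  qed
  also have "\<dots> = T k n a'" by (rule perm_T[OF n sp a'(1)])
  finally show ?thesis using a'(4) b'(4) by simp
qed


section \<open>representability\<close>

definition Rep :: "nat \<Rightarrow> 'm \<Rightarrow> (nat \<Rightarrow> int) \<Rightarrow> bool" where
  "Rep k m c \<longleftrightarrow> (\<exists>n a. pmp (2 ^ n) k a \<and> c = sig n a \<and> m = T k n a)"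

lemma lift1:
  assumes a: "pmp (2 ^ n) k a"
  shows "pmp (2 ^ Suc n) k (cat2 n a (\<lambda>_. 0)) \<and> sig (Suc n) (cat2 n a (\<lambda>_. 0)) = sig n a \<and>
         T k (Suc n) (cat2 n a (\<lambda>_. 0)) = T k n a"
proof (intro conjI)
  have z: "pmp (2 ^ n) k (\<lambda>_. 0)" unfolding pmp_def by simp
  show "pmp (2 ^ Suc n) k (cat2 n a (\<lambda>_. 0))" by (rule pmp_cat2[OF a z])
  show "sig (Suc n) (cat2 n a (\<lambda>_. 0)) = sig n a" by (rule ext) (simp add: sig_step sig_zero)
  show "T k (Suc n) (cat2 n a (\<lambda>_. 0)) = T k n a"
    using T_step[OF a z] T_zero D_zero_right[OF T_hom[OF a]] by simp
qed

lemma lift: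
  assumes a: "pmp (2 ^ n) k a" and nN: "n \<le> N"
  shows "\<exists>a'. pmp (2 ^ N) k a' \<and> sig N a' = sig n a \<and> T k N a' = T k n a"
  using nN
proof (induction N rule: dec_induct)
  case base then show ?case using a by blast
next
  case (step m)
  then obtain a' where a': "pmp (2 ^ m) k a'" "sig m a' = sig n a" "T k m a' = T k n a" by blast
  show ?case using lift1[OF a'(1)] a' by metis
qed

lemma Rep_hom: "Rep k m c \<Longrightarrow> m \<in> hom C X (Pw k)"
  unfolding Rep_def using T_hom by blast

lemma Rep_unique:
  assumes "Rep k m c" "Rep k m' c"
  shows "m = m'"
proof -
  obtain n a where na: "pmp (2 ^ n) k a" "c = sig n a" "m = T k n a" using assms(1) unfolding Rep_def by blast
  obtain n' b where nb: "pmp (2 ^ n') k b" "c = sig n' b" "m' = T k n' b" using assms(2) unfolding Rep_def by blast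
  define N where "N = max (max n n') 1"
  have N: "n \<le> N" "n' \<le> N" "1 \<le> N" unfolding N_def by auto
  obtain a' where a': "pmp (2 ^ N) k a'" "sig N a' = sig n a" "T k N a' = T k n a"
    using lift[OF na(1) N(1)] by blast
  obtain b' where b': "pmp (2 ^ N) k b'" "sig N b' = sig n' b" "T k N b' = T k n' b"
    using lift[OF nb(1) N(2)] by blast
  have "T k N a' = T k N b'" by (rule A0[OF N(3) a'(1) b'(1)]) (use a' b' na nb in simp)
  then show ?thesis using a' b' na nb by simp
qed

lemma Rep_cong: "Rep k m c \<Longrightarrow> c = c' \<Longrightarrow> Rep k m c'" by simp

lemma Rep_D:
  assumes "Rep k A a" "Rep k B b"
  shows "Rep k (D (Pw k) A B) (\<lambda>y. a y - b y)"
proof -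
  obtain n a0 where na: "pmp (2 ^ n) k a0" "a = sig n a0" "A = T k n a0" using assms(1) unfolding Rep_def by blast
  obtain n' b0 where nb: "pmp (2 ^ n') k b0" "b = sig n' b0" "B = T k n' b0" using assms(2) unfolding Rep_def by blast
  define N where "N = max n n'"
  obtain a' where a': "pmp (2 ^ N) k a'" "sig N a' = sig n a0" "T k N a' = T k n a0"
    using lift[OF na(1), of N] unfolding N_def by auto
  obtain b' where b': "pmp (2 ^ N) k b'" "sig N b' = sig n' b0" "T k N b' = T k n' b0"
    using lift[OF nb(1), of N] unfolding N_def by auto
  have "D (Pw k) A B = T k (Suc N) (cat2 N a' b')" using T_step[OF a'(1) b'(1)] a' b' na nb by simp
  moreover have "(\<lambda>y. a y - b y) = sig (Suc N) (cat2 N a' b')" using sig_step a' b' na nb by auto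
  ultimately show ?thesis unfolding Rep_def using pmp_cat2[OF a'(1) b'(1)] by blast
qed

lemma Rep_zmor: "Rep k (ZM X (Pw k)) (\<lambda>_. 0)"
  unfolding Rep_def
  by (rule exI[of _ 0], rule exI[of _ "\<lambda>_. 0"]) (simp add: pmp_def sig_zero T_zero)

lemma Rep_ins: "i \<in> {1..k} \<Longrightarrow> Rep k (ins k i) (\<lambda>y. if y = i then 1 else 0)"
  unfolding Rep_def
  by (rule exI[of _ 0], rule exI[of _ "\<lambda>_. i"]) (auto simp: pmp_def sig_const T0)

lemma Rep_add:
  assumes "Rep k A a" "Rep k B b"
  shows "Rep k (cg_add C Pw ins w (Pw k) A B) (\<lambda>y. a y + b y)"
proof -
  have "cg_add C Pw ins w (Pw k) A B = D (Pw k) A (D (Pw k) (ZM X (Pw k)) B)"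
    by (rule w_eq[OF Pw_obj Rep_hom[OF assms(1)] Rep_hom[OF assms(2)]])
  moreover have "Rep k (D (Pw k) A (D (Pw k) (ZM X (Pw k)) B)) (\<lambda>y. a y - (0 - b y))"
    by (rule Rep_D[OF assms(1) Rep_D[OF Rep_zmor assms(2)]])
  ultimately show ?thesis by simp
qed

lemma Rep_nu_ins: "i \<in> {1..k} \<Longrightarrow> Rep k (cmp C (ins k i) nu) (\<lambda>y. if y = i then -1 else 0)"
proof -
  assume i: "i \<in> {1..k}"
  have "Rep k (D (Pw k) (ZM X (Pw k)) (ins k i)) (\<lambda>y. 0 - (if y = i then 1 else 0))"
    by (rule Rep_D[OF Rep_zmor Rep_ins[OF i]])
  moreover have "(\<lambda>y. 0 - (if y = i then 1 else 0)) = (\<lambda>y. if y = i then -1 else (0::int))" by auto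
  ultimately show ?thesis using ins_nu[OF i] by simp
qed

lemma Rep_nmul: "Rep k g c \<Longrightarrow> Rep k (cg_nmul C X Pw ins w (Pw k) m g) (\<lambda>y. int m * c y)"
proof (induction m)
  case 0 then show ?case using Rep_zmor by simp
next
  case (Suc m)
  have "Rep k (cg_add C Pw ins w (Pw k) (cg_nmul C X Pw ins w (Pw k) m g) g) (\<lambda>y. int m * c y + c y)"
    by (rule Rep_add[OF Suc.IH[OF Suc.prems] Suc.prems])
  then show ?case by (simp add: algebra_simps)
qed

lemma Rep_zmul: "i \<in> {1..k} \<Longrightarrow> Rep k (cg_zmul C X Pw ins w nu (Pw k) z (ins k i)) (\<lambda>y. if y = i then z else 0)"
proof (cases "0 \<le> z")
  case True
  assume i: "i \<in> {1..k}"
  have "Rep k (cg_nmul C X Pw ins w (Pw k) (nat z) (ins k i)) (\<lambda>y. int (nat z) * (if y = i then 1 else 0))"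
    by (rule Rep_nmul[OF Rep_ins[OF i]])
  then show ?thesis using True unfolding cg_zmul_def by (auto elim!: Rep_cong)
next
  case False
  assume i: "i \<in> {1..k}"
  have "Rep k (cg_nmul C X Pw ins w (Pw k) (nat (- z)) (cmp C (ins k i) nu)) (\<lambda>y. int (nat (- z)) * (if y = i then -1 else 0))"
    by (rule Rep_nmul[OF Rep_nu_ins[OF i]])
  then show ?thesis using False unfolding cg_zmul_def by (auto elim!: Rep_cong)
qed

lemma Rep_fold:
  "set xs \<subseteq> {1..k} \<Longrightarrow>
   Rep k (foldr (\<lambda>i acc. cg_add C Pw ins w (Pw k) acc (cg_zmul C X Pw ins w nu (Pw k) (a i) (ins k i))) xs (ZM X (Pw k)))
     (\<lambda>y. sum_list (map (\<lambda>i. if i = y then a i else 0) xs))"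
proof (induction xs)
  case Nil then show ?case using Rep_zmor by simp
next
  case (Cons i xs)
  have i: "i \<in> {1..k}" using Cons.prems by simp
  have "Rep k (cg_add C Pw ins w (Pw k)
        (foldr (\<lambda>i acc. cg_add C Pw ins w (Pw k) acc (cg_zmul C X Pw ins w nu (Pw k) (a i) (ins k i))) xs (ZM X (Pw k)))
        (cg_zmul C X Pw ins w nu (Pw k) (a i) (ins k i)))
     (\<lambda>y. sum_list (map (\<lambda>i. if i = y then a i else 0) xs) + (if y = i then a i else 0))"
    by (rule Rep_add[OF Cons.IH Rep_zmul[OF i]]) (use Cons.prems in simp)
  then show ?case by (auto elim!: Rep_cong simp: fun_eq_iff)
qed

lemma Rep_cgmap: "Rep k (cg_map C X Pw ins w nu k a) (\<lambda>y. if y \<in> {1..k} then a y else 0)"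
proof -
  have "Rep k (cg_map C X Pw ins w nu k a) (\<lambda>y. sum_list (map (\<lambda>i. if i = y then a i else 0) [1..<k+1]))"
    unfolding cg_map_def by (rule Rep_fold) auto
  moreover have "\<And>y. sum_list (map (\<lambda>i. if i = y then a i else 0) [1..<k+1]) = (if y \<in> {1..k} then a y else 0)"
  proof -
    fix y
    have "sum_list (map (\<lambda>i. if i = y then a i else 0) [1..<k+1]) = (\<Sum>i\<in>{1..<k+1}. if i = y then a i else 0)"
      by (simp add: sum_set_upt_conv_sum_list_nat[symmetric])
    also have "\<dots> = (if y \<in> {1..k} then a y else 0)" by (simp add: sum.delta')
    finally show "sum_list (map (\<lambda>i. if i = y then a i else 0) [1..<k+1]) = (if y \<in> {1..k} then a y else 0)" .
  qed
  ultimately show ?thesis by simp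
qed


lemma cgdef: "cmp C (CP2 Y A B) w = cg_add C Pw ins w Y A B"
  by (simp add: cg_add_def)

lemma main:
  "abelian_cogroup C X Pw ins w nu \<and>
   (\<forall>n k f. 1 \<le> n \<and> f 0 = 0 \<and> (\<forall>x\<in>{1..2 ^ n}. f x \<le> k) \<longrightarrow>
      GA (2 ^ n) k f (RP n) = cg_map C X Pw ins w nu k (hz_act (2 ^ n) f (pm1 n)))"
proof (intro conjI allI impI)
  have i31: "1 \<in> {1..3::nat}" and i32: "2 \<in> {1..3::nat}" and i33: "3 \<in> {1..3::nat}" by auto
  have i21: "1 \<in> {1..2::nat}" and i22: "2 \<in> {1..2::nat}" by auto
  have i11: "1 \<in> {1..1::nat}" by auto
  have coass: "cmp C (CP2 (Pw 3) (cmp C (CP2 (Pw 3) (ins 3 1) (ins 3 2)) w) (ins 3 3)) w =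
     cmp C (CP2 (Pw 3) (ins 3 1) (cmp C (CP2 (Pw 3) (ins 3 2) (ins 3 3)) w)) w"
  proof -
    have R1: "Rep 3 (cg_add C Pw ins w (Pw 3) (cg_add C Pw ins w (Pw 3) (ins 3 1) (ins 3 2)) (ins 3 3))
       (\<lambda>y. ((if y = 1 then 1 else 0) + (if y = 2 then 1 else 0)) + (if y = 3 then 1 else 0))"
      by (rule Rep_add[OF Rep_add[OF Rep_ins[OF i31] Rep_ins[OF i32]] Rep_ins[OF i33]])
    have R2: "Rep 3 (cg_add C Pw ins w (Pw 3) (ins 3 1) (cg_add C Pw ins w (Pw 3) (ins 3 2) (ins 3 3)))
       (\<lambda>y. (if y = 1 then 1 else 0) + ((if y = 2 then 1 else 0) + (if y = 3 then 1 else 0)))"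
      by (rule Rep_add[OF Rep_ins[OF i31] Rep_add[OF Rep_ins[OF i32] Rep_ins[OF i33]]])
    have "cg_add C Pw ins w (Pw 3) (cg_add C Pw ins w (Pw 3) (ins 3 1) (ins 3 2)) (ins 3 3) =
          cg_add C Pw ins w (Pw 3) (ins 3 1) (cg_add C Pw ins w (Pw 3) (ins 3 2) (ins 3 3))"
      by (rule Rep_unique[OF R1 Rep_cong[OF R2]]) (simp add: fun_eq_iff)
    then show ?thesis by (simp add: cgdef)
  qed
  have cu1: "cmp C (CP2 X (ZM X X) (idm C X)) w = idm C X"
  proof -
    have R: "Rep 1 (cg_add C Pw ins w (Pw 1) (ZM X (Pw 1)) (ins 1 1)) (\<lambda>y. 0 + (if y = 1 then 1 else 0))"
      by (rule Rep_add[OF Rep_zmor Rep_ins[OF i11]])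
    have "cg_add C Pw ins w (Pw 1) (ZM X (Pw 1)) (ins 1 1) = ins 1 1"
      by (rule Rep_unique[OF R Rep_cong[OF Rep_ins[OF i11]]]) (simp add: fun_eq_iff)
    then show ?thesis unfolding Pw1 ins11 by (simp add: cgdef)
  qed
  have cu2: "cmp C (CP2 X (idm C X) (ZM X X)) w = idm C X"
  proof -
    have R: "Rep 1 (cg_add C Pw ins w (Pw 1) (ins 1 1) (ZM X (Pw 1))) (\<lambda>y. (if y = 1 then 1 else 0) + 0)"
      by (rule Rep_add[OF Rep_ins[OF i11] Rep_zmor])
    have "cg_add C Pw ins w (Pw 1) (ins 1 1) (ZM X (Pw 1)) = ins 1 1"
      by (rule Rep_unique[OF R Rep_cong[OF Rep_ins[OF i11]]]) (simp add: fun_eq_iff)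
    then show ?thesis unfolding Pw1 ins11 by (simp add: cgdef)
  qed
  have nu1: "cmp C (ins 1 1) nu = nu" unfolding ins11 by (rule id_left[OF nu_hom])
  have ci1: "cmp C (CP2 X nu (idm C X)) w = ZM X X"
  proof -
    have R: "Rep 1 (cg_add C Pw ins w (Pw 1) (cmp C (ins 1 1) nu) (ins 1 1))
        (\<lambda>y. (if y = 1 then -1 else 0) + (if y = 1 then 1 else 0))"
      by (rule Rep_add[OF Rep_nu_ins[OF i11] Rep_ins[OF i11]])
    have "cg_add C Pw ins w (Pw 1) (cmp C (ins 1 1) nu) (ins 1 1) = ZM X (Pw 1)"
      by (rule Rep_unique[OF R Rep_cong[OF Rep_zmor]]) (simp add: fun_eq_iff)
    then show ?thesis unfolding nu1 unfolding Pw1 ins11 by (simp add: cgdef)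
  qed
  have ci2: "cmp C (CP2 X (idm C X) nu) w = ZM X X"
  proof -
    have R: "Rep 1 (cg_add C Pw ins w (Pw 1) (ins 1 1) (cmp C (ins 1 1) nu))
        (\<lambda>y. (if y = 1 then 1 else 0) + (if y = 1 then -1 else 0))"
      by (rule Rep_add[OF Rep_ins[OF i11] Rep_nu_ins[OF i11]])
    have "cg_add C Pw ins w (Pw 1) (ins 1 1) (cmp C (ins 1 1) nu) = ZM X (Pw 1)"
      by (rule Rep_unique[OF R Rep_cong[OF Rep_zmor]]) (simp add: fun_eq_iff)
    then show ?thesis unfolding nu1 unfolding Pw1 ins11 by (simp add: cgdef)
  qed
  have cc: "cmp C (CP2 (Pw 2) (ins 2 2) (ins 2 1)) w = w"
  proof -
    have idp: "CP2 (Pw 2) (ins 2 1) (ins 2 2) = idm C (Pw 2)"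
      unfolding copair2_def
    proof (rule copair_unique[OF id_hom[OF Pw_obj]], rule ballI)
      fix i :: nat assume i: "i \<in> {1..2}"
      then have "i = 1 \<or> i = 2" by auto
      then show "cmp C (idm C (Pw 2)) (ins 2 i) = (if i = 1 then ins 2 1 else ins 2 2)"
        using id_left[OF ins_hom[OF i]] by auto
    qed
    have ww: "w = cg_add C Pw ins w (Pw 2) (ins 2 1) (ins 2 2)"
      using id_left[OF w_hom] idp by (simp add: cg_add_def)
    have R1: "Rep 2 (cg_add C Pw ins w (Pw 2) (ins 2 2) (ins 2 1)) (\<lambda>y. (if y = 2 then 1 else 0) + (if y = 1 then 1 else 0))"
      by (rule Rep_add[OF Rep_ins[OF i22] Rep_ins[OF i21]])
    have R2: "Rep 2 (cg_add C Pw ins w (Pw 2) (ins 2 1) (ins 2 2)) (\<lambda>y. (if y = 1 then 1 else 0) + (if y = 2 then 1 else 0))"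
      by (rule Rep_add[OF Rep_ins[OF i21] Rep_ins[OF i22]])
    have "cg_add C Pw ins w (Pw 2) (ins 2 2) (ins 2 1) = cg_add C Pw ins w (Pw 2) (ins 2 1) (ins 2 2)"
      by (rule Rep_unique[OF R1 Rep_cong[OF R2]]) (simp add: fun_eq_iff)
    then show ?thesis using ww by (simp add: cgdef)
  qed
  show "abelian_cogroup C X Pw ins w nu"
    unfolding abelian_cogroup_def using w_hom nu_hom coass cu1 cu2 ci1 ci2 cc by blast
next
  fix n k :: nat and f :: "nat \<Rightarrow> nat"
  assume asm: "1 \<le> n \<and> f 0 = 0 \<and> (\<forall>x\<in>{1..2 ^ n}. f x \<le> k)"
  have p: "pmp (2 ^ n) k f" using asm unfolding pmp_def by simp
  have R1: "Rep k (T k n f) (sig n f)" unfolding Rep_def using p by blast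
  have R2: "Rep k (cg_map C X Pw ins w nu k (sig n f)) (\<lambda>y. if y \<in> {1..k} then sig n f y else 0)"
    by (rule Rep_cgmap)
  have "(\<lambda>y. if y \<in> {1..k} then sig n f y else 0) = sig n f"
  proof
    fix y
    show "(if y \<in> {1..k} then sig n f y else 0) = sig n f y"
    proof (cases "y \<in> {1..k}")
      case True then show ?thesis by simp
    next
      case False
      then have "y = 0 \<or> k < y" by auto
      then show ?thesis
      proof
        assume "y = 0" then show ?thesis by (simp add: sig_def hz_act_def)
      next
        assume ky: "k < y"
        have "\<forall>x\<in>{1..2 ^ n}. f x \<noteq> y" using asm ky by fastforce
        then have "(\<Sum>x\<in>{1..2 ^ n}. if f x = y then pm1 n x else 0) = 0" by (intro sum.neutral) auto
        then show ?thesis using False by (simp add: sig_def hz_act_def)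
      qed
    qed
  qed
  then have "T k n f = cg_map C X Pw ins w nu k (sig n f)" using Rep_unique[OF R1] R2 by simp
  then show "GA (2 ^ n) k f (RP n) = cg_map C X Pw ins w nu k (hz_act (2 ^ n) f (pm1 n))"
    unfolding T_def sig_def .
qed

lemma main':
  "let w = GA 3 2 (pmap 3 2) (GA 4 3 (pmap 4 2) (RP 2));
       \<nu> = GA 2 1 (pmap 2 1) r
   in abelian_cogroup C X Pw ins w \<nu> \<and>
      (\<forall>n k f. 1 \<le> n \<and> f 0 = 0 \<and> (\<forall>x\<in>{1..2 ^ n}. f x \<le> k) \<longrightarrow>
         GA (2 ^ n) k f (RP n) = cg_map C X Pw ins w \<nu> k (hz_act (2 ^ n) f (pm1 n)))"
  using main unfolding w_def nu_def Let_def .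

end

theorem mainTheorem12:
  fixes C :: "('o,'m) category" and X :: 'o and Pw :: "nat \<Rightarrow> 'o"
    and ins :: "nat \<Rightarrow> nat \<Rightarrow> 'm" and r :: 'm
  assumes "is_category C" and "has_zero_object C" and "has_finite_coproducts C"
    and "X \<in> obj C"
    and "\<forall>k. is_coproduct C (\<lambda>_. X) k (Pw k) (ins k)"
    and "Pw 1 = X" and "ins 1 1 = idm C X"
    and "r \<in> hom C X (Pw 2)"
    and "formal_difference_law C X Pw ins r"
  shows "let w = gact C X Pw ins 3 2 (pmap 3 2)
                   (gact C X Pw ins 4 3 (pmap 4 2) (rpow C X Pw ins r 2));
             \<nu> = gact C X Pw ins 2 1 (pmap 2 1) r
         in abelian_cogroup C X Pw ins w \<nu> \<and>
            (\<forall>n k f. 1 \<le> n \<and> f 0 = 0 \<and> (\<forall>x\<in>{1..2 ^ n}. f x \<le> k) \<longrightarrow>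
               gact C X Pw ins (2 ^ n) k f (rpow C X Pw ins r n) =
               cg_map C X Pw ins w \<nu> k (hz_act (2 ^ n) f (pm1 n)))"
proof -
  have ctx: "fdl_ctx C X Pw ins r"
    unfolding fdl_ctx_def using assms(1,2,4,5,6,7,8,9) by blast
  show ?thesis by (rule fdl_ctx.main'[OF ctx])
qed

end
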